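(* In a generalised differential Seely category, the family $\mathscr D^X_A:W(X,A)\to\,!^SW(X,A)$, for $X\in\mathscr C$, $A\in\mathcal L$, is a natural transformation $W\Rightarrow\,!^S W$: for every morphism $(f,u):(X,A)\to(Y,B)$ of $LS(\mathscr C)$, $\mathscr D^X_A;!^S(W(f,u))=W(f,u);\mathscr D^Y_B$.
   Context: Composition is diagrammatic; monoidal categories are strict. Setting: an LNL adjunction $\mathcal F\dashv\mathcal U$, $\mathcal F:\mathscr C\to\mathcal L$, between cartesian $(\mathscr C,\times,I)$ and symmetric monoidal $(\mathcal L,\otimes,1)$; $\mathcal U$ lax monoidal via $n_{A,B}:\mathcal U(A)\times\mathcal U(B)\to\mathcal U(A\otimes B)$; $\mathcal F$ strong monoidal via isomorphisms $m_{X,Y}:\mathcal F(X)\otimes\mathcal F(Y)\to\mathcal F(X\times Y)$, $m_1$; unit $\eta$; comonad $!=\mathcal F\mathcal U$; $\mathbf c_X:=\mathcal F(\Delta_X);m_{X,X}^{-1}$, $\mathbf w_X:=\mathcal F(t_X);m_1^{-1}$. $LS(\mathscr C)$: objects $(X,A)$; morphisms $(f,u):(X,A)\to(Y,B)$ with $f:X\to Y$, $u:\mathcal F(X)\otimes A\to B$; composition $(f,u);(g,v)=(f;g,(\mathbf c_X\otimes\mathrm{id}_A);(\mathcal F(f)\otimes u);v)$; identity $(\mathrm{id}_X,\mathbf w_X\otimes\mathrm{id}_A)$; $\mathbf{ls}(f,u)=f$; vertical morphisms over $X$ are $(\mathrm{id}_X,u)$. With biproducts $\oplus$ in $\mathcal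 L$: fibrewise injections $\iota^X_i=(\mathrm{id}_X,\mathbf w_X\otimes\iota_i)$; products in $LS(\mathscr C)$: $(X\times Y,A\oplus B)$, projections $(\pi_i,\mathbf w_{X\times Y}\otimes\pi_i)$. The functor $!^S:LS(\mathscr C)\to LS(\mathscr C)$: $!^S(X,A)=(X,!A)$, $!^S(f,u)=(f,(\mathcal F(\eta_X)\otimes\mathrm{id}_{!A});m_{\mathcal U\mathcal F(X),\mathcal U(A)};\mathcal F(n_{\mathcal F(X),A});!u)$. GDSC: $\mathcal L$ additive (CMon-enriched, $\otimes$ bilinear) with finite products, and a functor $\mathcal T:\mathscr C\to LS(\mathscr C)$ with: (t.1) $\mathbf{ls}\circ\mathcal T=\mathrm{id}$, so $\mathcal T(X)=(X,\lambda(X))$, and $\varphi_{X,Y}:=\langle\mathcal T(\pi_1),\mathcal T(\pi_2)\rangle:\mathcal T(X\times Y)\to(X\times Y,\lambda(X)\oplus\lambda(Y))$ is an isomorphism; (t.2) $\mathcal T(\mathcal U(A))=(\mathcal U(A),A)$; (t.3) with $i^{X,Y}_2:=\iota^{X\times Y}_2;\varphi^{-1}_{X,Y}$, comprehension $⦃(f,u)⦄:=\langle\pi_1;f,(\eta_X\times\mathrm{id}_{\mathcal U(A)});n_{\mathcal F(X),A};\mathcal U(u)\rangle:X\times\mathcal U(A)\to Y\times\mathcal U(B)$, weakening functor $W(X,A):=(X\times\mathcal U(A),A)$, $W(f,u):=(⦃(f,u)⦄,(\mathcal F(\pi_1)\otimes\mathrm{id}_A);u)$: $W(f,u);i^{Y,\mathcal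 U(B)}_2=i^{X,\mathcal U(A)}_2;\mathcal T(⦃(f,u)⦄)$. Differential: for $h:X\to Y$ with $\mathcal T(h)=(h,v)$, $\mathrm D(h):=(\mathrm{id}_X,v)$; for $h:X\times Y\to Z$, $\mathrm D_2(h):=i^{X,Y}_2;\mathrm D(h)$. Define $\mathscr D^X_A:=\mathrm D_2(\pi_2;\eta_{\mathcal U(A)}):(X\times\mathcal U(A),A)\to(X\times\mathcal U(A),!A)$, where $\pi_2;\eta_{\mathcal U(A)}:X\times\mathcal U(A)\to\mathcal U(!A)$. *)

theory Defs
  imports Main
begin

text \<open>
  Composition is diagrammatic throughout: comp f g means "first f, then g".
  Types: 'co = objects of C, 'ca = arrows of C, 'lo = objects of L, 'la = arrows of L.
\<close>

record ('co, 'ca, 'lo, 'la) lnl_data =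
  cDom   :: "'ca \<Rightarrow> 'co"
  cCod   :: "'ca \<Rightarrow> 'co"
  cComp  :: "'ca \<Rightarrow> 'ca \<Rightarrow> 'ca"
  cId    :: "'co \<Rightarrow> 'ca"
  cProd  :: "'co \<Rightarrow> 'co \<Rightarrow> 'co"
  cPi1   :: "'co \<Rightarrow> 'co \<Rightarrow> 'ca"
  cPi2   :: "'co \<Rightarrow> 'co \<Rightarrow> 'ca"
  cPair  :: "'ca \<Rightarrow> 'ca \<Rightarrow> 'ca"
  cTerm  :: "'co"
  cBang  :: "'co \<Rightarrow> 'ca"
  lDom   :: "'la \<Rightarrow> 'lo"
  lCod   :: "'la \<Rightarrow> 'lo"
  lComp  :: "'la \<Rightarrow> 'la \<Rightarrow> 'la"
  lId    :: "'lo \<Rightarrow> 'la"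
  lTen   :: "'lo \<Rightarrow> 'lo \<Rightarrow> 'lo"
  lTenM  :: "'la \<Rightarrow> 'la \<Rightarrow> 'la"
  lUnit  :: "'lo"
  lSym   :: "'lo \<Rightarrow> 'lo \<Rightarrow> 'la"
  lZero  :: "'lo \<Rightarrow> 'lo \<Rightarrow> 'la"
  lAdd   :: "'la \<Rightarrow> 'la \<Rightarrow> 'la"
  lProd  :: "'lo \<Rightarrow> 'lo \<Rightarrow> 'lo"
  lPi1   :: "'lo \<Rightarrow> 'lo \<Rightarrow> 'la"
  lPi2   :: "'lo \<Rightarrow> 'lo \<Rightarrow> 'la"
  lPair  :: "'la \<Rightarrow> 'la \<Rightarrow> 'la"
  lTerm  :: "'lo"
  lBang  :: "'lo \<Rightarrow> 'la"
  FO     :: "'co \<Rightarrow> 'lo"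
  FM     :: "'ca \<Rightarrow> 'la"
  UO     :: "'lo \<Rightarrow> 'co"
  UM     :: "'la \<Rightarrow> 'ca"
  adjEta :: "'co \<Rightarrow> 'ca"
  adjEps :: "'lo \<Rightarrow> 'la"
  monN   :: "'lo \<Rightarrow> 'lo \<Rightarrow> 'ca"
  monN1  :: "'ca"
  monM   :: "'co \<Rightarrow> 'co \<Rightarrow> 'la"
  monMinv :: "'co \<Rightarrow> 'co \<Rightarrow> 'la"
  monM1  :: "'la"
  monM1inv :: "'la"
  (* the functor T : C -> LS(C); T(X) = (X, tLam X), T(h) = (h, tMor h) *)
  tLam   :: "'co \<Rightarrow> 'lo"
  tMor   :: "'ca \<Rightarrow> 'la"

definition chom :: "('co,'ca,'lo,'la) lnl_data \<Rightarrow> 'ca \<Rightarrow> 'co \<Rightarrow> 'co \<Rightarrow> bool" where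
  "chom S f X Y \<longleftrightarrow> cDom S f = X \<and> cCod S f = Y"

definition lhom :: "('co,'ca,'lo,'la) lnl_data \<Rightarrow> 'la \<Rightarrow> 'lo \<Rightarrow> 'lo \<Rightarrow> bool" where
  "lhom S f A B \<longleftrightarrow> lDom S f = A \<and> lCod S f = B"

definition cProdM :: "('co,'ca,'lo,'la) lnl_data \<Rightarrow> 'ca \<Rightarrow> 'ca \<Rightarrow> 'ca" where
  "cProdM S f g = cPair S (cComp S (cPi1 S (cDom S f) (cDom S g)) f)
                          (cComp S (cPi2 S (cDom S f) (cDom S g)) g)"

definition cDiag :: "('co,'ca,'lo,'la) lnl_data \<Rightarrow> 'co \<Rightarrow> 'ca" where
  "cDiag S X = cPair S (cId S X) (cId S X)"

definition cSwap :: "('co,'ca,'lo,'la) lnl_data \<Rightarrow> 'co \<Rightarrow> 'co \<Rightarrow> 'ca" where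
  "cSwap S X Y = cPair S (cPi2 S X Y) (cPi1 S X Y)"

definition lInj2 :: "('co,'ca,'lo,'la) lnl_data \<Rightarrow> 'lo \<Rightarrow> 'lo \<Rightarrow> 'la" where
  "lInj2 S A B = lPair S (lZero S B A) (lId S B)"

definition contr :: "('co,'ca,'lo,'la) lnl_data \<Rightarrow> 'co \<Rightarrow> 'la" where
  "contr S X = lComp S (FM S (cDiag S X)) (monMinv S X X)"

definition weak :: "('co,'ca,'lo,'la) lnl_data \<Rightarrow> 'co \<Rightarrow> 'la" where
  "weak S X = lComp S (FM S (cBang S X)) (monM1inv S)"

subsection \<open>The category LS(C)\<close>

text \<open>Objects are pairs (X,A); morphisms are pairs (f,u).  Since u does not determine A,
  composition and the identity take the relevant object explicitly.\<close>

definition lshom :: "('co,'ca,'lo,'la) lnl_data \<Rightarrow> 'ca \<times> 'la \<Rightarrow> 'co \<times> 'lo \<Rightarrow> 'co \<times> 'lo \<Rightarrow> bool" where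
  "lshom S fu XA YB \<longleftrightarrow> chom S (fst fu) (fst XA) (fst YB)
      \<and> lhom S (snd fu) (lTen S (FO S (fst XA)) (snd XA)) (snd YB)"

definition lsComp :: "('co,'ca,'lo,'la) lnl_data \<Rightarrow> 'lo \<Rightarrow> 'ca \<times> 'la \<Rightarrow> 'ca \<times> 'la \<Rightarrow> 'ca \<times> 'la" where
  "lsComp S A fu gv =
     (cComp S (fst fu) (fst gv),
      lComp S (lComp S (lTenM S (contr S (cDom S (fst fu))) (lId S A))
                       (lTenM S (FM S (fst fu)) (snd fu)))
              (snd gv))"

definition lsId :: "('co,'ca,'lo,'la) lnl_data \<Rightarrow> 'co \<times> 'lo \<Rightarrow> 'ca \<times> 'la" where
  "lsId S XA = (cId S (fst XA), lTenM S (weak S (fst XA)) (lId S (snd XA)))"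

definition lsIso :: "('co,'ca,'lo,'la) lnl_data \<Rightarrow> 'ca \<times> 'la \<Rightarrow> 'co \<times> 'lo \<Rightarrow> 'co \<times> 'lo \<Rightarrow> bool" where
  "lsIso S fu XA YB \<longleftrightarrow> lshom S fu XA YB \<and>
     (\<exists>gv. lshom S gv YB XA \<and> lsComp S (snd XA) fu gv = lsId S XA
                             \<and> lsComp S (snd YB) gv fu = lsId S YB)"

definition lsPair :: "('co,'ca,'lo,'la) lnl_data \<Rightarrow> 'ca \<times> 'la \<Rightarrow> 'ca \<times> 'la \<Rightarrow> 'ca \<times> 'la" where
  "lsPair S fu gv = (cPair S (fst fu) (fst gv), lPair S (snd fu) (snd gv))"

definition lsInj2 :: "('co,'ca,'lo,'la) lnl_data \<Rightarrow> 'co \<Rightarrow> 'lo \<Rightarrow> 'lo \<Rightarrow> 'ca \<times> 'la" where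
  "lsInj2 S X A B = (cId S X, lTenM S (weak S X) (lInj2 S A B))"

definition bangS :: "('co,'ca,'lo,'la) lnl_data \<Rightarrow> 'co \<times> 'lo \<Rightarrow> 'ca \<times> 'la \<Rightarrow> 'ca \<times> 'la" where
  "bangS S XA fu =
     (fst fu,
      lComp S (lComp S (lComp S
        (lTenM S (FM S (adjEta S (fst XA))) (lId S (FO S (UO S (snd XA)))))
        (monM S (UO S (FO S (fst XA))) (UO S (snd XA))))
        (FM S (monN S (FO S (fst XA)) (snd XA))))
        (FM S (UM S (snd fu))))"

definition tFun :: "('co,'ca,'lo,'la) lnl_data \<Rightarrow> 'ca \<Rightarrow> 'ca \<times> 'la" where
  "tFun S h = (h, tMor S h)"

definition phiT :: "('co,'ca,'lo,'la) lnl_data \<Rightarrow> 'co \<Rightarrow> 'co \<Rightarrow> 'ca \<times> 'la" where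
  "phiT S X Y = lsPair S (tFun S (cPi1 S X Y)) (tFun S (cPi2 S X Y))"

(* its inverse in LS(C) (unique when it exists, by (t.1)) *)
definition phiInv :: "('co,'ca,'lo,'la) lnl_data \<Rightarrow> 'co \<Rightarrow> 'co \<Rightarrow> 'ca \<times> 'la" where
  "phiInv S X Y = (SOME gv.
      lshom S gv (cProd S X Y, lProd S (tLam S X) (tLam S Y)) (cProd S X Y, tLam S (cProd S X Y))
    \<and> lsComp S (tLam S (cProd S X Y)) (phiT S X Y) gv = lsId S (cProd S X Y, tLam S (cProd S X Y))
    \<and> lsComp S (lProd S (tLam S X) (tLam S Y)) gv (phiT S X Y)
         = lsId S (cProd S X Y, lProd S (tLam S X) (tLam S Y)))"

definition iT2 :: "('co,'ca,'lo,'la) lnl_data \<Rightarrow> 'co \<Rightarrow> 'co \<Rightarrow> 'ca \<times> 'la" where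
  "iT2 S X Y = lsComp S (tLam S Y) (lsInj2 S (cProd S X Y) (tLam S X) (tLam S Y)) (phiInv S X Y)"

definition compr :: "('co,'ca,'lo,'la) lnl_data \<Rightarrow> 'co \<times> 'lo \<Rightarrow> 'ca \<times> 'la \<Rightarrow> 'ca" where
  "compr S XA fu =
     cPair S (cComp S (cPi1 S (fst XA) (UO S (snd XA))) (fst fu))
             (cComp S (cComp S (cProdM S (adjEta S (fst XA)) (cId S (UO S (snd XA))))
                               (monN S (FO S (fst XA)) (snd XA)))
                      (UM S (snd fu)))"

definition WObj :: "('co,'ca,'lo,'la) lnl_data \<Rightarrow> 'co \<times> 'lo \<Rightarrow> 'co \<times> 'lo" where
  "WObj S XA = (cProd S (fst XA) (UO S (snd XA)), snd XA)"

definition WMor :: "('co,'ca,'lo,'la) lnl_data \<Rightarrow> 'co \<times> 'lo \<Rightarrow> 'ca \<times> 'la \<Rightarrow> 'ca \<times> 'la" where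
  "WMor S XA fu =
     (compr S XA fu,
      lComp S (lTenM S (FM S (cPi1 S (fst XA) (UO S (snd XA)))) (lId S (snd XA))) (snd fu))"

definition diffD :: "('co,'ca,'lo,'la) lnl_data \<Rightarrow> 'ca \<Rightarrow> 'ca \<times> 'la" where
  "diffD S h = (cId S (cDom S h), tMor S h)"

definition diffD2 :: "('co,'ca,'lo,'la) lnl_data \<Rightarrow> 'co \<Rightarrow> 'co \<Rightarrow> 'ca \<Rightarrow> 'ca \<times> 'la" where
  "diffD2 S X Y h = lsComp S (tLam S Y) (iT2 S X Y) (diffD S h)"

definition scrD :: "('co,'ca,'lo,'la) lnl_data \<Rightarrow> 'co \<Rightarrow> 'lo \<Rightarrow> 'ca \<times> 'la" where
  "scrD S X A = diffD2 S X (UO S A)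
                  (cComp S (cPi2 S X (UO S A)) (adjEta S (UO S A)))"


definition C_category :: "('co,'ca,'lo,'la) lnl_data \<Rightarrow> bool" where
  "C_category S \<longleftrightarrow>
     (\<forall>X. chom S (cId S X) X X)
   \<and> (\<forall>f g X Y Z. chom S f X Y \<longrightarrow> chom S g Y Z \<longrightarrow> chom S (cComp S f g) X Z)
   \<and> (\<forall>f X Y. chom S f X Y \<longrightarrow> cComp S (cId S X) f = f \<and> cComp S f (cId S Y) = f)
   \<and> (\<forall>f g h W X Y Z. chom S f W X \<longrightarrow> chom S g X Y \<longrightarrow> chom S h Y Z \<longrightarrow>
        cComp S (cComp S f g) h = cComp S f (cComp S g h))"

definition C_cartesian :: "('co,'ca,'lo,'la) lnl_data \<Rightarrow> bool" where
  "C_cartesian S \<longleftrightarrow>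
     (\<forall>X Y. chom S (cPi1 S X Y) (cProd S X Y) X \<and> chom S (cPi2 S X Y) (cProd S X Y) Y)
   \<and> (\<forall>f g Z X Y. chom S f Z X \<longrightarrow> chom S g Z Y \<longrightarrow>
        chom S (cPair S f g) Z (cProd S X Y)
        \<and> cComp S (cPair S f g) (cPi1 S X Y) = f \<and> cComp S (cPair S f g) (cPi2 S X Y) = g)
   \<and> (\<forall>h Z X Y. chom S h Z (cProd S X Y) \<longrightarrow>
        h = cPair S (cComp S h (cPi1 S X Y)) (cComp S h (cPi2 S X Y)))
   \<and> (\<forall>X. chom S (cBang S X) X (cTerm S))
   \<and> (\<forall>h X. chom S h X (cTerm S) \<longrightarrow> h = cBang S X)"

definition C_strict :: "('co,'ca,'lo,'la) lnl_data \<Rightarrow> bool" where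
  "C_strict S \<longleftrightarrow>
     (\<forall>X Y Z. cProd S (cProd S X Y) Z = cProd S X (cProd S Y Z)
        \<and> cPi1 S (cProd S X Y) Z = cPair S (cPi1 S X (cProd S Y Z))
                                         (cComp S (cPi2 S X (cProd S Y Z)) (cPi1 S Y Z))
        \<and> cPi2 S (cProd S X Y) Z = cComp S (cPi2 S X (cProd S Y Z)) (cPi2 S Y Z))
   \<and> (\<forall>X. cProd S (cTerm S) X = X \<and> cPi2 S (cTerm S) X = cId S X)
   \<and> (\<forall>X. cProd S X (cTerm S) = X \<and> cPi1 S X (cTerm S) = cId S X)"

definition L_category :: "('co,'ca,'lo,'la) lnl_data \<Rightarrow> bool" where
  "L_category S \<longleftrightarrow>
     (\<forall>A. lhom S (lId S A) A A)
   \<and> (\<forall>f g A B C. lhom S f A B \<longrightarrow> lhom S g B C \<longrightarrow> lhom S (lComp S f g) A C)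
   \<and> (\<forall>f A B. lhom S f A B \<longrightarrow> lComp S (lId S A) f = f \<and> lComp S f (lId S B) = f)
   \<and> (\<forall>f g h A B C D. lhom S f A B \<longrightarrow> lhom S g B C \<longrightarrow> lhom S h C D \<longrightarrow>
        lComp S (lComp S f g) h = lComp S f (lComp S g h))"

definition L_symmetric_strict_monoidal :: "('co,'ca,'lo,'la) lnl_data \<Rightarrow> bool" where
  "L_symmetric_strict_monoidal S \<longleftrightarrow>
     (\<forall>f g A B C D. lhom S f A B \<longrightarrow> lhom S g C D \<longrightarrow> lhom S (lTenM S f g) (lTen S A C) (lTen S B D))
   \<and> (\<forall>A B. lTenM S (lId S A) (lId S B) = lId S (lTen S A B))
   \<and> (\<forall>f f' g g' A B C A' B' C'. lhom S f A B \<longrightarrow> lhom S f' B C \<longrightarrow> lhom S g A' B' \<longrightarrow> lhom S g' B' C' \<longrightarrow>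
        lTenM S (lComp S f f') (lComp S g g') = lComp S (lTenM S f g) (lTenM S f' g'))
   \<and> (\<forall>A B C. lTen S (lTen S A B) C = lTen S A (lTen S B C))
   \<and> (\<forall>A. lTen S (lUnit S) A = A \<and> lTen S A (lUnit S) = A)
   \<and> (\<forall>f g h. lTenM S (lTenM S f g) h = lTenM S f (lTenM S g h))
   \<and> (\<forall>f. lTenM S (lId S (lUnit S)) f = f \<and> lTenM S f (lId S (lUnit S)) = f)
   \<and> (\<forall>A B. lhom S (lSym S A B) (lTen S A B) (lTen S B A))
   \<and> (\<forall>f g A B C D. lhom S f A B \<longrightarrow> lhom S g C D \<longrightarrow>
        lComp S (lTenM S f g) (lSym S B D) = lComp S (lSym S A C) (lTenM S g f))
   \<and> (\<forall>A B. lComp S (lSym S A B) (lSym S B A) = lId S (lTen S A B))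
   \<and> (\<forall>A B C. lSym S A (lTen S B C) = lComp S (lTenM S (lSym S A B) (lId S C)) (lTenM S (lId S B) (lSym S A C)))"

definition L_additive :: "('co,'ca,'lo,'la) lnl_data \<Rightarrow> bool" where
  "L_additive S \<longleftrightarrow>
     (\<forall>A B. lhom S (lZero S A B) A B)
   \<and> (\<forall>f g A B. lhom S f A B \<longrightarrow> lhom S g A B \<longrightarrow> lhom S (lAdd S f g) A B)
   \<and> (\<forall>f g h A B. lhom S f A B \<longrightarrow> lhom S g A B \<longrightarrow> lhom S h A B \<longrightarrow>
        lAdd S (lAdd S f g) h = lAdd S f (lAdd S g h))
   \<and> (\<forall>f g A B. lhom S f A B \<longrightarrow> lhom S g A B \<longrightarrow> lAdd S f g = lAdd S g f)
   \<and> (\<forall>f A B. lhom S f A B \<longrightarrow> lAdd S f (lZero S A B) = f)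
   \<and> (\<forall>f g h A B C. lhom S f A B \<longrightarrow> lhom S g B C \<longrightarrow> lhom S h B C \<longrightarrow>
        lComp S f (lAdd S g h) = lAdd S (lComp S f g) (lComp S f h))
   \<and> (\<forall>f g h A B C. lhom S f A B \<longrightarrow> lhom S g A B \<longrightarrow> lhom S h B C \<longrightarrow>
        lComp S (lAdd S f g) h = lAdd S (lComp S f h) (lComp S g h))
   \<and> (\<forall>f A B C. lhom S f A B \<longrightarrow> lComp S f (lZero S B C) = lZero S A C)
   \<and> (\<forall>f A B C. lhom S f B C \<longrightarrow> lComp S (lZero S A B) f = lZero S A C)
   \<and> (\<forall>f g h A B C D. lhom S f A B \<longrightarrow> lhom S g A B \<longrightarrow> lhom S h C D \<longrightarrow>
        lTenM S (lAdd S f g) h = lAdd S (lTenM S f h) (lTenM S g h)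
        \<and> lTenM S h (lAdd S f g) = lAdd S (lTenM S h f) (lTenM S h g))
   \<and> (\<forall>h A B C D. lhom S h C D \<longrightarrow>
        lTenM S (lZero S A B) h = lZero S (lTen S A C) (lTen S B D)
        \<and> lTenM S h (lZero S A B) = lZero S (lTen S C A) (lTen S D B))"

definition L_products :: "('co,'ca,'lo,'la) lnl_data \<Rightarrow> bool" where
  "L_products S \<longleftrightarrow>
     (\<forall>A B. lhom S (lPi1 S A B) (lProd S A B) A \<and> lhom S (lPi2 S A B) (lProd S A B) B)
   \<and> (\<forall>f g C A B. lhom S f C A \<longrightarrow> lhom S g C B \<longrightarrow>
        lhom S (lPair S f g) C (lProd S A B)
        \<and> lComp S (lPair S f g) (lPi1 S A B) = f \<and> lComp S (lPair S f g) (lPi2 S A B) = g)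
   \<and> (\<forall>h C A B. lhom S h C (lProd S A B) \<longrightarrow>
        h = lPair S (lComp S h (lPi1 S A B)) (lComp S h (lPi2 S A B)))
   \<and> (\<forall>A. lhom S (lBang S A) A (lTerm S))
   \<and> (\<forall>h A. lhom S h A (lTerm S) \<longrightarrow> h = lBang S A)"

definition functors :: "('co,'ca,'lo,'la) lnl_data \<Rightarrow> bool" where
  "functors S \<longleftrightarrow>
     (\<forall>f X Y. chom S f X Y \<longrightarrow> lhom S (FM S f) (FO S X) (FO S Y))
   \<and> (\<forall>X. FM S (cId S X) = lId S (FO S X))
   \<and> (\<forall>f g X Y Z. chom S f X Y \<longrightarrow> chom S g Y Z \<longrightarrow> FM S (cComp S f g) = lComp S (FM S f) (FM S g))
   \<and> (\<forall>f A B. lhom S f A B \<longrightarrow> chom S (UM S f) (UO S A) (UO S B))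
   \<and> (\<forall>A. UM S (lId S A) = cId S (UO S A))
   \<and> (\<forall>f g A B C. lhom S f A B \<longrightarrow> lhom S g B C \<longrightarrow> UM S (lComp S f g) = cComp S (UM S f) (UM S g))"

definition adjunction :: "('co,'ca,'lo,'la) lnl_data \<Rightarrow> bool" where
  "adjunction S \<longleftrightarrow>
     (\<forall>X. chom S (adjEta S X) X (UO S (FO S X)))
   \<and> (\<forall>A. lhom S (adjEps S A) (FO S (UO S A)) A)
   \<and> (\<forall>f X Y. chom S f X Y \<longrightarrow> cComp S f (adjEta S Y) = cComp S (adjEta S X) (UM S (FM S f)))
   \<and> (\<forall>g A B. lhom S g A B \<longrightarrow> lComp S (FM S (UM S g)) (adjEps S B) = lComp S (adjEps S A) g)
   \<and> (\<forall>X. lComp S (FM S (adjEta S X)) (adjEps S (FO S X)) = lId S (FO S X))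
   \<and> (\<forall>A. cComp S (adjEta S (UO S A)) (UM S (adjEps S A)) = cId S (UO S A))"

definition U_lax_monoidal :: "('co,'ca,'lo,'la) lnl_data \<Rightarrow> bool" where
  "U_lax_monoidal S \<longleftrightarrow>
     (\<forall>A B. chom S (monN S A B) (cProd S (UO S A) (UO S B)) (UO S (lTen S A B)))
   \<and> chom S (monN1 S) (cTerm S) (UO S (lUnit S))
   \<and> (\<forall>f g A A' B B'. lhom S f A A' \<longrightarrow> lhom S g B B' \<longrightarrow>
        cComp S (cProdM S (UM S f) (UM S g)) (monN S A' B') = cComp S (monN S A B) (UM S (lTenM S f g)))
   \<and> (\<forall>A B C. cComp S (cProdM S (monN S A B) (cId S (UO S C))) (monN S (lTen S A B) C)
              = cComp S (cProdM S (cId S (UO S A)) (monN S B C)) (monN S A (lTen S B C)))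
   \<and> (\<forall>A. cComp S (cProdM S (monN1 S) (cId S (UO S A))) (monN S (lUnit S) A) = cId S (UO S A))
   \<and> (\<forall>A. cComp S (cProdM S (cId S (UO S A)) (monN1 S)) (monN S A (lUnit S)) = cId S (UO S A))
   \<and> (\<forall>A B. cComp S (cSwap S (UO S A) (UO S B)) (monN S B A) = cComp S (monN S A B) (UM S (lSym S A B)))"

definition F_strong_monoidal :: "('co,'ca,'lo,'la) lnl_data \<Rightarrow> bool" where
  "F_strong_monoidal S \<longleftrightarrow>
     (\<forall>X Y. lhom S (monM S X Y) (lTen S (FO S X) (FO S Y)) (FO S (cProd S X Y))
          \<and> lhom S (monMinv S X Y) (FO S (cProd S X Y)) (lTen S (FO S X) (FO S Y))
          \<and> lComp S (monM S X Y) (monMinv S X Y) = lId S (lTen S (FO S X) (FO S Y))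
          \<and> lComp S (monMinv S X Y) (monM S X Y) = lId S (FO S (cProd S X Y)))
   \<and> lhom S (monM1 S) (lUnit S) (FO S (cTerm S))
   \<and> lhom S (monM1inv S) (FO S (cTerm S)) (lUnit S)
   \<and> lComp S (monM1 S) (monM1inv S) = lId S (lUnit S)
   \<and> lComp S (monM1inv S) (monM1 S) = lId S (FO S (cTerm S))
   \<and> (\<forall>f g X X' Y Y'. chom S f X X' \<longrightarrow> chom S g Y Y' \<longrightarrow>
        lComp S (lTenM S (FM S f) (FM S g)) (monM S X' Y') = lComp S (monM S X Y) (FM S (cProdM S f g)))
   \<and> (\<forall>X Y Z. lComp S (lTenM S (monM S X Y) (lId S (FO S Z))) (monM S (cProd S X Y) Z)
              = lComp S (lTenM S (lId S (FO S X)) (monM S Y Z)) (monM S X (cProd S Y Z)))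
   \<and> (\<forall>X. lComp S (lTenM S (monM1 S) (lId S (FO S X))) (monM S (cTerm S) X) = lId S (FO S X))
   \<and> (\<forall>X. lComp S (lTenM S (lId S (FO S X)) (monM1 S)) (monM S X (cTerm S)) = lId S (FO S X))
   \<and> (\<forall>X Y. lComp S (lSym S (FO S X) (FO S Y)) (monM S Y X) = lComp S (monM S X Y) (FM S (cSwap S X Y)))"

definition monoidal_adjunction :: "('co,'ca,'lo,'la) lnl_data \<Rightarrow> bool" where
  "monoidal_adjunction S \<longleftrightarrow>
     (\<forall>X Y. cComp S (cComp S (cProdM S (adjEta S X) (adjEta S Y)) (monN S (FO S X) (FO S Y)))
                    (UM S (monM S X Y)) = adjEta S (cProd S X Y))
   \<and> cComp S (monN1 S) (UM S (monM1 S)) = adjEta S (cTerm S)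
   \<and> (\<forall>A B. lComp S (lComp S (monM S (UO S A) (UO S B)) (FM S (monN S A B))) (adjEps S (lTen S A B))
              = lTenM S (adjEps S A) (adjEps S B))
   \<and> lComp S (lComp S (monM1 S) (FM S (monN1 S))) (adjEps S (lUnit S)) = lId S (lUnit S)"

definition LNL :: "('co,'ca,'lo,'la) lnl_data \<Rightarrow> bool" where
  "LNL S \<longleftrightarrow> C_category S \<and> C_cartesian S \<and> C_strict S
     \<and> L_category S \<and> L_symmetric_strict_monoidal S
     \<and> functors S \<and> adjunction S \<and> U_lax_monoidal S \<and> F_strong_monoidal S
     \<and> monoidal_adjunction S"

(* T : C -> LS(C) is a functor with ls \<circ> T = id (the latter is built into the representation) *)
definition T_functor :: "('co,'ca,'lo,'la) lnl_data \<Rightarrow> bool" where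
  "T_functor S \<longleftrightarrow>
     (\<forall>h X Y. chom S h X Y \<longrightarrow> lshom S (tFun S h) (X, tLam S X) (Y, tLam S Y))
   \<and> (\<forall>X. tFun S (cId S X) = lsId S (X, tLam S X))
   \<and> (\<forall>f g X Y Z. chom S f X Y \<longrightarrow> chom S g Y Z \<longrightarrow>
        tFun S (cComp S f g) = lsComp S (tLam S X) (tFun S f) (tFun S g))"

definition GDSC :: "('co,'ca,'lo,'la) lnl_data \<Rightarrow> bool" where
  "GDSC S \<longleftrightarrow> LNL S \<and> L_additive S \<and> L_products S \<and> T_functor S
     \<comment> \<open>(t.1)\<close>
     \<and> (\<forall>X Y. lsIso S (phiT S X Y) (cProd S X Y, tLam S (cProd S X Y))
                                   (cProd S X Y, lProd S (tLam S X) (tLam S Y)))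
     \<comment> \<open>(t.2)\<close>
     \<and> (\<forall>A. tLam S (UO S A) = A)
     \<comment> \<open>(t.3)\<close>
     \<and> (\<forall>f u X A Y B. lshom S (f, u) (X, A) (Y, B) \<longrightarrow>
          lsComp S A (WMor S (X, A) (f, u)) (iT2 S Y (UO S B))
            = lsComp S A (iT2 S X (UO S A)) (tFun S (compr S (X, A) (f, u))))"

end

theory Submission
  imports Defs
begin


locale gd = fixes S :: "('co,'ca,'lo,'la) lnl_data" assumes G: "GDSC S"
begin

lemma Cc: "C_category S" and Ccart: "C_cartesian S" and Cs: "C_strict S"
  and Lc: "L_category S" and Lm: "L_symmetric_strict_monoidal S"
  and Fu: "functors S" and Ad: "adjunction S" and Ul: "U_lax_monoidal S"
  and Fs: "F_strong_monoidal S" and Ma: "monoidal_adjunction S"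
  and La: "L_additive S" and Lp: "L_products S" and Tf: "T_functor S"
  and t1: "\<forall>X Y. lsIso S (phiT S X Y) (cProd S X Y, tLam S (cProd S X Y))
                                   (cProd S X Y, lProd S (tLam S X) (tLam S Y))"
  and t2: "\<And>A. tLam S (UO S A) = A"
  and t3: "\<forall>f u X A Y B. lshom S (f, u) (X, A) (Y, B) \<longrightarrow>
          lsComp S A (WMor S (X, A) (f, u)) (iT2 S Y (UO S B))
            = lsComp S A (iT2 S X (UO S A)) (tFun S (compr S (X, A) (f, u)))"
  using G unfolding GDSC_def LNL_def by auto

abbreviation "cD \<equiv> cDom S" abbreviation "cC \<equiv> cCod S"
abbreviation "lD \<equiv> lDom S" abbreviation "lC \<equiv> lCod S"

lemma c_id[simp]: "cD (cId S X) = X" "cC (cId S X) = X"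
  using Cc unfolding C_category_def chom_def by auto
lemma c_comp[simp]: "cC f = cD g \<Longrightarrow> cD (cComp S f g) = cD f"
   "cC f = cD g \<Longrightarrow> cC (cComp S f g) = cC g"
  using Cc unfolding C_category_def chom_def by metis+
lemma c_idl[simp]: "cD f = X \<Longrightarrow> cComp S (cId S X) f = f"
  and c_idr[simp]: "cC f = Y \<Longrightarrow> cComp S f (cId S Y) = f"
  using Cc unfolding C_category_def chom_def by auto
lemma c_assoc: "cC f = cD g \<Longrightarrow> cC g = cD h \<Longrightarrow>
   cComp S (cComp S f g) h = cComp S f (cComp S g h)"
  using Cc unfolding C_category_def chom_def by metis
lemma c_pi[simp]: "cD (cPi1 S X Y) = cProd S X Y" "cC (cPi1 S X Y) = X"
  "cD (cPi2 S X Y) = cProd S X Y" "cC (cPi2 S X Y) = Y"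
  using Ccart unfolding C_cartesian_def chom_def by auto
lemma c_pair[simp]: "cD f = cD g \<Longrightarrow> cD (cPair S f g) = cD f"
  "cD f = cD g \<Longrightarrow> cC (cPair S f g) = cProd S (cC f) (cC g)"
  "cD f = cD g \<Longrightarrow> cC f = X \<Longrightarrow> cC g = Y \<Longrightarrow> cComp S (cPair S f g) (cPi1 S X Y) = f"
  "cD f = cD g \<Longrightarrow> cC f = X \<Longrightarrow> cC g = Y \<Longrightarrow> cComp S (cPair S f g) (cPi2 S X Y) = g"
  using Ccart unfolding C_cartesian_def chom_def by metis+
lemma c_eta: "cC h = cProd S X Y \<Longrightarrow> cPair S (cComp S h (cPi1 S X Y)) (cComp S h (cPi2 S X Y)) = h"
  using Ccart unfolding C_cartesian_def chom_def by metis
lemma c_bang[simp]: "cD (cBang S X) = X" "cC (cBang S X) = cTerm S"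
  using Ccart unfolding C_cartesian_def chom_def by auto
lemma c_bang_uniq: "cC h = cTerm S \<Longrightarrow> h = cBang S (cD h)"
  using Ccart unfolding C_cartesian_def chom_def by metis
lemma c_pair_comp: "cC h = cD f \<Longrightarrow> cD f = cD g \<Longrightarrow>
   cComp S h (cPair S f g) = cPair S (cComp S h f) (cComp S h g)"
proof -
  assume a: "cC h = cD f" "cD f = cD g"
  have "cComp S h (cPair S f g) = cPair S (cComp S (cComp S h (cPair S f g)) (cPi1 S (cC f) (cC g)))
          (cComp S (cComp S h (cPair S f g)) (cPi2 S (cC f) (cC g)))"
    using a by (intro c_eta[symmetric]) simp
  also have "\<dots> = cPair S (cComp S h f) (cComp S h g)" using a by (simp add: c_assoc)
  finally show ?thesis .
qed
lemma c_pair_inj: "cD f = cD g \<Longrightarrow> cD f' = cD g' \<Longrightarrow> cC f = cC f' \<Longrightarrow> cC g = cC g' \<Longrightarrow>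
   cPair S f g = cPair S f' g' \<Longrightarrow> f = f' \<and> g = g'"
  by (metis c_pair(3,4))
lemma c_strict: "cProd S (cProd S X Y) Z = cProd S X (cProd S Y Z)"
  "cPi1 S (cProd S X Y) Z = cPair S (cPi1 S X (cProd S Y Z)) (cComp S (cPi2 S X (cProd S Y Z)) (cPi1 S Y Z))"
  "cPi2 S (cProd S X Y) Z = cComp S (cPi2 S X (cProd S Y Z)) (cPi2 S Y Z)"
  "cProd S (cTerm S) X = X" "cPi2 S (cTerm S) X = cId S X"
  "cProd S X (cTerm S) = X" "cPi1 S X (cTerm S) = cId S X"
  using Cs unfolding C_strict_def by auto

lemma cProdM_ty[simp]: "cD (cProdM S f g) = cProd S (cD f) (cD g)"
  "cC (cProdM S f g) = cProd S (cC f) (cC g)"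
  unfolding cProdM_def by simp_all
lemma pair_prodM: "cD p = cD q \<Longrightarrow> cC p = cD f \<Longrightarrow> cC q = cD g \<Longrightarrow>
  cComp S (cPair S p q) (cProdM S f g) = cPair S (cComp S p f) (cComp S q g)"
  unfolding cProdM_def by (simp add: c_pair_comp c_assoc[symmetric])
lemma prodM_prodM: "cC f = cD f' \<Longrightarrow> cC g = cD g' \<Longrightarrow>
  cComp S (cProdM S f g) (cProdM S f' g') = cProdM S (cComp S f f') (cComp S g g')"
proof -
  assume a: "cC f = cD f'" "cC g = cD g'"
  have "cComp S (cProdM S f g) (cProdM S f' g') = cPair S (cComp S (cComp S (cPi1 S (cD f) (cD g)) f) f')
      (cComp S (cComp S (cPi2 S (cD f) (cD g)) g) g')"
    by (subst (1) cProdM_def, rule pair_prodM) (simp_all add: a)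
  then show ?thesis using a by (simp add: c_assoc cProdM_def)
qed
lemma prodM_id: "cProdM S (cId S X) (cId S Y) = cId S (cProd S X Y)"
  unfolding cProdM_def using c_eta[of "cId S (cProd S X Y)" X Y] by simp

lemma l_id[simp]: "lD (lId S X) = X" "lC (lId S X) = X"
  using Lc unfolding L_category_def lhom_def by auto
lemma l_comp[simp]: "lC f = lD g \<Longrightarrow> lD (lComp S f g) = lD f"
   "lC f = lD g \<Longrightarrow> lC (lComp S f g) = lC g"
  using Lc unfolding L_category_def lhom_def by metis+
lemma l_idl[simp]: "lD f = X \<Longrightarrow> lComp S (lId S X) f = f"
  and l_idr[simp]: "lC f = Y \<Longrightarrow> lComp S f (lId S Y) = f"
  using Lc unfolding L_category_def lhom_def by auto
lemma l_assoc: "lC f = lD g \<Longrightarrow> lC g = lD h \<Longrightarrow>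
   lComp S (lComp S f g) h = lComp S f (lComp S g h)"
  using Lc unfolding L_category_def lhom_def by metis
lemma l_ten[simp]: "lD (lTenM S f g) = lTen S (lD f) (lD g)" "lC (lTenM S f g) = lTen S (lC f) (lC g)"
  using Lm unfolding L_symmetric_strict_monoidal_def lhom_def by metis+
lemma l_ten_id[simp]: "lTenM S (lId S A) (lId S B) = lId S (lTen S A B)"
  using Lm unfolding L_symmetric_strict_monoidal_def lhom_def by metis
lemma l_inter: "lC f = lD f' \<Longrightarrow> lC g = lD g' \<Longrightarrow>
   lTenM S (lComp S f f') (lComp S g g') = lComp S (lTenM S f g) (lTenM S f' g')"
  using Lm unfolding L_symmetric_strict_monoidal_def lhom_def by metis
lemma l_strict[simp]: "lTen S (lTen S A B) C = lTen S A (lTen S B C)"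
  "lTen S (lUnit S) A = A" "lTen S A (lUnit S) = A"
  "lTenM S (lTenM S f g) h = lTenM S f (lTenM S g h)"
  "lTenM S (lId S (lUnit S)) f = f" "lTenM S f (lId S (lUnit S)) = f"
  using Lm unfolding L_symmetric_strict_monoidal_def by auto

lemma l_pi[simp]: "lD (lPi1 S X Y) = lProd S X Y" "lC (lPi1 S X Y) = X"
  "lD (lPi2 S X Y) = lProd S X Y" "lC (lPi2 S X Y) = Y"
  using Lp unfolding L_products_def lhom_def by auto
lemma l_pair[simp]: "lD f = lD g \<Longrightarrow> lD (lPair S f g) = lD f"
  "lD f = lD g \<Longrightarrow> lC (lPair S f g) = lProd S (lC f) (lC g)"
  "lD f = lD g \<Longrightarrow> lC f = X \<Longrightarrow> lC g = Y \<Longrightarrow> lComp S (lPair S f g) (lPi1 S X Y) = f"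
  "lD f = lD g \<Longrightarrow> lC f = X \<Longrightarrow> lC g = Y \<Longrightarrow> lComp S (lPair S f g) (lPi2 S X Y) = g"
  using Lp unfolding L_products_def lhom_def by metis+
lemma l_eta: "lC h = lProd S X Y \<Longrightarrow> lPair S (lComp S h (lPi1 S X Y)) (lComp S h (lPi2 S X Y)) = h"
  using Lp unfolding L_products_def lhom_def by metis
lemma l_pair_comp: "lC h = lD f \<Longrightarrow> lD f = lD g \<Longrightarrow>
   lComp S h (lPair S f g) = lPair S (lComp S h f) (lComp S h g)"
proof -
  assume a: "lC h = lD f" "lD f = lD g"
  have "lComp S h (lPair S f g) = lPair S (lComp S (lComp S h (lPair S f g)) (lPi1 S (lC f) (lC g)))
          (lComp S (lComp S h (lPair S f g)) (lPi2 S (lC f) (lC g)))"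
    using a by (intro l_eta[symmetric]) simp
  also have "\<dots> = lPair S (lComp S h f) (lComp S h g)" using a by (simp add: l_assoc)
  finally show ?thesis .
qed
lemma l_zero[simp]: "lD (lZero S A B) = A" "lC (lZero S A B) = B"
  using La unfolding L_additive_def lhom_def by auto
lemma l_zero_comp[simp]: "lC f = A \<Longrightarrow> lComp S f (lZero S A C) = lZero S (lD f) C"
  "lD f = B \<Longrightarrow> lComp S (lZero S A B) f = lZero S A (lC f)"
  using La unfolding L_additive_def lhom_def by metis+
lemma l_zero_ten[simp]: "lTenM S (lZero S A B) h = lZero S (lTen S A (lD h)) (lTen S B (lC h))"
  "lTenM S h (lZero S A B) = lZero S (lTen S (lD h) A) (lTen S (lC h) B)"
  using La unfolding L_additive_def lhom_def by metis+

lemma F_ty[simp]: "lD (FM S f) = FO S (cD f)" "lC (FM S f) = FO S (cC f)"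
  using Fu unfolding functors_def lhom_def chom_def by metis+
lemma F_id[simp]: "FM S (cId S X) = lId S (FO S X)"
  using Fu unfolding functors_def by metis
lemma F_comp: "cC f = cD g \<Longrightarrow> FM S (cComp S f g) = lComp S (FM S f) (FM S g)"
  using Fu unfolding functors_def chom_def by metis
lemma U_ty[simp]: "cD (UM S f) = UO S (lD f)" "cC (UM S f) = UO S (lC f)"
  using Fu unfolding functors_def lhom_def chom_def by metis+
lemma U_id[simp]: "UM S (lId S X) = cId S (UO S X)"
  using Fu unfolding functors_def by metis
lemma U_comp: "lC f = lD g \<Longrightarrow> UM S (lComp S f g) = cComp S (UM S f) (UM S g)"
  using Fu unfolding functors_def lhom_def by metis

lemma eta_ty[simp]: "cD (adjEta S X) = X" "cC (adjEta S X) = UO S (FO S X)"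
  using Ad unfolding adjunction_def chom_def by metis+
lemma eta_nat: "cComp S f (adjEta S (cC f)) = cComp S (adjEta S (cD f)) (UM S (FM S f))"
  using Ad unfolding adjunction_def chom_def by metis

lemma n_ty[simp]: "cD (monN S A B) = cProd S (UO S A) (UO S B)" "cC (monN S A B) = UO S (lTen S A B)"
  using Ul unfolding U_lax_monoidal_def chom_def by metis+
lemma n_nat: "cComp S (cProdM S (UM S f) (UM S g)) (monN S (lC f) (lC g))
     = cComp S (monN S (lD f) (lD g)) (UM S (lTenM S f g))"
  using Ul unfolding U_lax_monoidal_def lhom_def by metis

lemma m_ty[simp]: "lD (monM S X Y) = lTen S (FO S X) (FO S Y)" "lC (monM S X Y) = FO S (cProd S X Y)"
  "lD (monMinv S X Y) = FO S (cProd S X Y)" "lC (monMinv S X Y) = lTen S (FO S X) (FO S Y)"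
  "lD (monM1 S) = lUnit S" "lC (monM1 S) = FO S (cTerm S)"
  "lD (monM1inv S) = FO S (cTerm S)" "lC (monM1inv S) = lUnit S"
  using Fs unfolding F_strong_monoidal_def lhom_def by metis+
lemma m_inv[simp]: "lComp S (monM S X Y) (monMinv S X Y) = lId S (lTen S (FO S X) (FO S Y))"
  "lComp S (monMinv S X Y) (monM S X Y) = lId S (FO S (cProd S X Y))"
  "lComp S (monM1 S) (monM1inv S) = lId S (lUnit S)"
  "lComp S (monM1inv S) (monM1 S) = lId S (FO S (cTerm S))"
  using Fs unfolding F_strong_monoidal_def by metis+
lemma m_nat: "lComp S (lTenM S (FM S f) (FM S g)) (monM S (cC f) (cC g))
     = lComp S (monM S (cD f) (cD g)) (FM S (cProdM S f g))"
  using Fs unfolding F_strong_monoidal_def chom_def by metis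
lemma m_assoc: "lComp S (lTenM S (monM S X Y) (lId S (FO S Z))) (monM S (cProd S X Y) Z)
              = lComp S (lTenM S (lId S (FO S X)) (monM S Y Z)) (monM S X (cProd S Y Z))"
  using Fs unfolding F_strong_monoidal_def by metis
lemma m_unitl: "lComp S (lTenM S (monM1 S) (lId S (FO S X))) (monM S (cTerm S) X) = lId S (FO S X)"
  using Fs unfolding F_strong_monoidal_def by metis

lemma ma_eta: "cComp S (cComp S (cProdM S (adjEta S X) (adjEta S Y)) (monN S (FO S X) (FO S Y)))
                    (UM S (monM S X Y)) = adjEta S (cProd S X Y)"
  using Ma unfolding monoidal_adjunction_def by metis

lemma T_ty: "lD (tMor S h) = lTen S (FO S (cD h)) (tLam S (cD h))" "lC (tMor S h) = tLam S (cC h)"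
  using Tf unfolding T_functor_def lshom_def tFun_def chom_def lhom_def by auto
lemma T_comp: "cC f = cD g \<Longrightarrow> tFun S (cComp S f g) = lsComp S (tLam S (cD f)) (tFun S f) (tFun S g)"
  using Tf unfolding T_functor_def chom_def by metis

end

context gd begin

lemma diag_ty[simp]: "cD (cDiag S X) = X" "cC (cDiag S X) = cProd S X X"
  unfolding cDiag_def by simp_all
lemma contr_ty[simp]: "lD (contr S X) = FO S X" "lC (contr S X) = lTen S (FO S X) (FO S X)"
  unfolding contr_def by simp_all
lemma weak_ty[simp]: "lD (weak S X) = FO S X" "lC (weak S X) = lUnit S"
  unfolding weak_def by simp_all

lemma m_inv_assoc[simp]: "lD h = lTen S (FO S X) (FO S Y) \<Longrightarrow> lComp S (monM S X Y) (lComp S (monMinv S X Y) h) = h"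
  "lD h = FO S (cProd S X Y) \<Longrightarrow> lComp S (monMinv S X Y) (lComp S (monM S X Y) h) = h"
  "lD h = lUnit S \<Longrightarrow> lComp S (monM1 S) (lComp S (monM1inv S) h) = h"
  "lD h = FO S (cTerm S) \<Longrightarrow> lComp S (monM1inv S) (lComp S (monM1 S) h) = h"
  by (simp_all add: l_assoc[symmetric])

lemma l_inter_assoc[simp]: "lC f = lD f' \<Longrightarrow> lC g = lD g' \<Longrightarrow> lTen S (lC f') (lC g') = lD h \<Longrightarrow>
   lComp S (lTenM S f g) (lComp S (lTenM S f' g') h) = lComp S (lTenM S (lComp S f f') (lComp S g g')) h"
  by (simp add: l_inter l_assoc)

lemma minv_nat: "lComp S (FM S (cProdM S f g)) (monMinv S (cC f) (cC g))
   = lComp S (monMinv S (cD f) (cD g)) (lTenM S (FM S f) (FM S g))"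
proof -
  have "lComp S (FM S (cProdM S f g)) (monMinv S (cC f) (cC g)) =
     lComp S (lComp S (monMinv S (cD f) (cD g)) (monM S (cD f) (cD g))) (lComp S (FM S (cProdM S f g)) (monMinv S (cC f) (cC g)))"
    by (simp add: l_assoc[symmetric])
  also have "\<dots> = lComp S (monMinv S (cD f) (cD g)) (lComp S (lComp S (monM S (cD f) (cD g)) (FM S (cProdM S f g))) (monMinv S (cC f) (cC g)))"
    by (simp add: l_assoc)
  also have "\<dots> = lComp S (monMinv S (cD f) (cD g)) (lComp S (lComp S (lTenM S (FM S f) (FM S g)) (monM S (cC f) (cC g))) (monMinv S (cC f) (cC g)))"
    by (simp add: m_nat)
  also have "\<dots> = lComp S (monMinv S (cD f) (cD g)) (lTenM S (FM S f) (FM S g))"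
    by (simp add: l_assoc)
  finally show ?thesis .
qed

lemma weak_nat: "lComp S (FM S f) (weak S (cC f)) = weak S (cD f)"
proof -
  have "cComp S f (cBang S (cC f)) = cBang S (cD f)"
    by (rule c_bang_uniq[of "cComp S f (cBang S (cC f))", simplified])
  then show ?thesis unfolding weak_def
    by (simp add: l_assoc[symmetric] F_comp[symmetric])
qed

lemma minv_unit: "monMinv S (cTerm S) X = lTenM S (monM1 S) (lId S (FO S X))"
proof -
  have "monMinv S (cTerm S) X = lComp S (lComp S (lTenM S (monM1 S) (lId S (FO S X))) (monM S (cTerm S) X)) (monMinv S (cTerm S) X)"
    using m_unitl[of X] c_strict(4)[of X] by simp
  also have "\<dots> = lTenM S (monM1 S) (lId S (FO S X))" by (simp add: l_assoc)
  finally show ?thesis .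
qed

lemma bang_id_pair: "cPair S (cBang S X) (cId S X) = cId S X"
proof -
  have "cPair S (cComp S (cId S X) (cPi1 S (cTerm S) X)) (cComp S (cId S X) (cPi2 S (cTerm S) X)) = cId S X"
    by (rule c_eta) (simp add: c_strict)
  moreover have "cPi1 S (cTerm S) X = cBang S X"
    using c_bang_uniq[of "cPi1 S (cTerm S) X"] by (simp add: c_strict)
  ultimately show ?thesis by (simp add: c_strict)
qed

lemma counit: "lComp S (contr S X) (lTenM S (weak S X) (lId S (FO S X))) = lId S (FO S X)"
proof -
  have "lTenM S (weak S X) (lId S (FO S X)) = lComp S (lTenM S (FM S (cBang S X)) (FM S (cId S X))) (lTenM S (monM1inv S) (lId S (FO S X)))"
    unfolding weak_def by (simp add: l_inter[symmetric])
  hence "lComp S (contr S X) (lTenM S (weak S X) (lId S (FO S X))) =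
     lComp S (FM S (cDiag S X)) (lComp S (lComp S (monMinv S X X) (lTenM S (FM S (cBang S X)) (FM S (cId S X)))) (lTenM S (monM1inv S) (lId S (FO S X))))"
    unfolding contr_def by (simp add: l_assoc)
  also have "\<dots> = lComp S (FM S (cDiag S X)) (lComp S (lComp S (FM S (cProdM S (cBang S X) (cId S X))) (monMinv S (cTerm S) X)) (lTenM S (monM1inv S) (lId S (FO S X))))"
    using minv_nat[of "cBang S X" "cId S X"] by simp
  also have "\<dots> = lComp S (FM S (cComp S (cDiag S X) (cProdM S (cBang S X) (cId S X)))) (lComp S (monMinv S (cTerm S) X) (lTenM S (monM1inv S) (lId S (FO S X))))"
    by (simp add: l_assoc F_comp c_strict)
  also have "cComp S (cDiag S X) (cProdM S (cBang S X) (cId S X)) = cId S X"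
    unfolding cDiag_def by (simp add: pair_prodM bang_id_pair)
  also have "lComp S (monMinv S (cTerm S) X) (lTenM S (monM1inv S) (lId S (FO S X))) = lId S (FO S X)"
    unfolding minv_unit by (simp add: l_inter[symmetric])
  finally show ?thesis by (simp add: c_strict)
qed

lemma diag_nat: "cComp S f (cDiag S (cC f)) = cComp S (cDiag S (cD f)) (cProdM S f f)"
  unfolding cDiag_def by (simp add: c_pair_comp pair_prodM)

lemma contr_nat: "lComp S (FM S f) (contr S (cC f)) = lComp S (contr S (cD f)) (lTenM S (FM S f) (FM S f))"
proof -
  have "lComp S (FM S f) (contr S (cC f)) = lComp S (FM S (cComp S f (cDiag S (cC f)))) (monMinv S (cC f) (cC f))"
    unfolding contr_def by (simp add: l_assoc F_comp)
  also have "\<dots> = lComp S (FM S (cDiag S (cD f))) (lComp S (FM S (cProdM S f f)) (monMinv S (cC f) (cC f)))"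
    by (simp add: diag_nat F_comp l_assoc)
  also have "\<dots> = lComp S (contr S (cD f)) (lTenM S (FM S f) (FM S f))"
    unfolding contr_def minv_nat by (simp add: l_assoc)
  finally show ?thesis .
qed

lemma inv_unique: "lComp S b a = lId S (lD b) \<Longrightarrow> lComp S a b' = lId S (lD a)
  \<Longrightarrow> lC b = lD a \<Longrightarrow> lC a = lD b' \<Longrightarrow> lD b = lC a \<Longrightarrow> b = b'"
proof -
  assume a: "lComp S b a = lId S (lD b)" "lComp S a b' = lId S (lD a)" "lC b = lD a" "lC a = lD b'" "lD b = lC a"
  have "b = lComp S b (lId S (lC b))" by simp
  also have "\<dots> = lComp S b (lComp S a b')" using a(2,3) by simp
  also have "\<dots> = lComp S (lComp S b a) b'" using a(3,4) by (simp add: l_assoc)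
  also have "\<dots> = lComp S (lId S (lD b)) b'" using a(1) by simp
  also have "\<dots> = b'" using a(4,5) by simp
  finally show ?thesis .
qed

lemma diag_coassoc: "cPair S (cDiag S X) (cId S X) = cPair S (cId S X) (cDiag S X)"
proof -
  define h where "h = cPair S (cDiag S X) (cId S X)"
  define p1 where "p1 = cPi1 S X (cProd S X X)"
  define p2 where "p2 = cPi2 S X (cProd S X X)"
  have hc: "cC h = cProd S X (cProd S X X)" "cD h = X" unfolding h_def by (simp_all add: c_strict)
  have ty: "cD p1 = cC h" "cD p2 = cC h" "cC p1 = X" "cC p2 = cProd S X X"
    unfolding p1_def p2_def hc by simp_all
  have e1: "cComp S h (cPi1 S (cProd S X X) X) = cDiag S X" unfolding h_def by simp
  have e2: "cComp S h (cPi2 S (cProd S X X) X) = cId S X" unfolding h_def by simp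
  have "cComp S h (cPi1 S (cProd S X X) X) = cPair S (cComp S h p1) (cComp S (cComp S h p2) (cPi1 S X X))"
    unfolding c_strict(2) p1_def[symmetric] p2_def[symmetric] using ty by (simp add: c_pair_comp c_assoc)
  hence eq: "cPair S (cComp S h p1) (cComp S (cComp S h p2) (cPi1 S X X)) = cPair S (cId S X) (cId S X)"
    using e1 unfolding cDiag_def by simp
  have a1: "cComp S h p1 = cId S X"
  proof -
    have "cComp S h p1 = cComp S (cPair S (cComp S h p1) (cComp S (cComp S h p2) (cPi1 S X X))) (cPi1 S X X)"
      using ty hc by simp
    also have "\<dots> = cId S X" unfolding eq by simp
    finally show ?thesis .
  qed
  have a2: "cComp S (cComp S h p2) (cPi1 S X X) = cId S X"
  proof -
    have "cComp S (cComp S h p2) (cPi1 S X X) = cComp S (cPair S (cComp S h p1) (cComp S (cComp S h p2) (cPi1 S X X))) (cPi2 S X X)"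
      using ty hc by simp
    also have "\<dots> = cId S X" unfolding eq by simp
    finally show ?thesis .
  qed
  have a3: "cComp S (cComp S h p2) (cPi2 S X X) = cId S X"
    using e2 ty unfolding c_strict(3) p2_def[symmetric] by (simp add: c_assoc)
  have "cComp S h p2 = cDiag S X"
    using c_eta[of "cComp S h p2" X X] a2 a3 ty by (simp add: cDiag_def)
  then show ?thesis using c_eta[of h X "cProd S X X"] a1 hc unfolding h_def p1_def p2_def by simp
qed

lemma diag_coassoc2: "cComp S (cDiag S X) (cProdM S (cDiag S X) (cId S X)) = cComp S (cDiag S X) (cProdM S (cId S X) (cDiag S X))"
proof -
  have "cComp S (cDiag S X) (cProdM S (cDiag S X) (cId S X)) = cPair S (cDiag S X) (cId S X)"
    by (subst (1) cDiag_def) (simp add: pair_prodM)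
  moreover have "cComp S (cDiag S X) (cProdM S (cId S X) (cDiag S X)) = cPair S (cId S X) (cDiag S X)"
    by (subst (1) cDiag_def) (simp add: pair_prodM)
  ultimately show ?thesis using diag_coassoc by simp
qed

lemma minv_assoc: "lComp S (monMinv S (cProd S X Y) Z) (lTenM S (monMinv S X Y) (lId S (FO S Z)))
   = lComp S (monMinv S X (cProd S Y Z)) (lTenM S (lId S (FO S X)) (monMinv S Y Z))"
proof (rule inv_unique[where a="lComp S (lTenM S (monM S X Y) (lId S (FO S Z))) (monM S (cProd S X Y) Z)"])
  show "lComp S (lComp S (monMinv S (cProd S X Y) Z) (lTenM S (monMinv S X Y) (lId S (FO S Z))))
     (lComp S (lTenM S (monM S X Y) (lId S (FO S Z))) (monM S (cProd S X Y) Z)) =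
    lId S (lD (lComp S (monMinv S (cProd S X Y) Z) (lTenM S (monMinv S X Y) (lId S (FO S Z)))))"
    by (simp add: l_assoc l_inter[symmetric])
  show "lComp S (lComp S (lTenM S (monM S X Y) (lId S (FO S Z))) (monM S (cProd S X Y) Z))
     (lComp S (monMinv S X (cProd S Y Z)) (lTenM S (lId S (FO S X)) (monMinv S Y Z))) =
    lId S (lD (lComp S (lTenM S (monM S X Y) (lId S (FO S Z))) (monM S (cProd S X Y) Z)))"
    unfolding m_assoc by (simp add: l_assoc l_inter[symmetric] c_strict)
qed (simp_all add: m_assoc c_strict)

lemma coassoc: "lComp S (contr S X) (lTenM S (contr S X) (lId S (FO S X)))
   = lComp S (contr S X) (lTenM S (lId S (FO S X)) (contr S X))"
proof -
  have "lComp S (contr S X) (lTenM S (contr S X) (lId S (FO S X))) =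
    lComp S (FM S (cDiag S X)) (lComp S (lComp S (monMinv S X X) (lTenM S (FM S (cDiag S X)) (FM S (cId S X))))
       (lTenM S (monMinv S X X) (lId S (FO S X))))"
    unfolding contr_def by (simp add: l_assoc l_inter[symmetric])
  also have "\<dots> = lComp S (FM S (cDiag S X)) (lComp S (lComp S (FM S (cProdM S (cDiag S X) (cId S X))) (monMinv S (cProd S X X) X))
       (lTenM S (monMinv S X X) (lId S (FO S X))))"
    using minv_nat[of "cDiag S X" "cId S X"] by simp
  also have "\<dots> = lComp S (FM S (cComp S (cDiag S X) (cProdM S (cDiag S X) (cId S X))))
       (lComp S (monMinv S (cProd S X X) X) (lTenM S (monMinv S X X) (lId S (FO S X))))"
    by (simp add: l_assoc F_comp)
  also have "\<dots> = lComp S (FM S (cComp S (cDiag S X) (cProdM S (cId S X) (cDiag S X))))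
       (lComp S (monMinv S X (cProd S X X)) (lTenM S (lId S (FO S X)) (monMinv S X X)))"
    unfolding minv_assoc diag_coassoc2 c_strict ..
  also have "\<dots> = lComp S (FM S (cDiag S X)) (lComp S (lComp S (FM S (cProdM S (cId S X) (cDiag S X))) (monMinv S X (cProd S X X)))
       (lTenM S (lId S (FO S X)) (monMinv S X X)))"
    by (simp add: l_assoc F_comp)
  also have "\<dots> = lComp S (FM S (cDiag S X)) (lComp S (lComp S (monMinv S X X) (lTenM S (FM S (cId S X)) (FM S (cDiag S X))))
       (lTenM S (lId S (FO S X)) (monMinv S X X)))"
    using minv_nat[of "cId S X" "cDiag S X"] by simp
  also have "\<dots> = lComp S (contr S X) (lTenM S (lId S (FO S X)) (contr S X))"
    unfolding contr_def by (simp add: l_assoc l_inter[symmetric])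
  finally show ?thesis .
qed

end

context gd begin

lemma lshom_iff: "lshom S (f,u) (X,A) (Y,B) \<longleftrightarrow> cD f = X \<and> cC f = Y \<and> lD u = lTen S (FO S X) A \<and> lC u = B"
  by (auto simp: lshom_def chom_def lhom_def)

lemma ls_comp: "lsComp S A (f,u) (g,v) = (cComp S f g,
   lComp S (lComp S (lTenM S (contr S (cD f)) (lId S A)) (lTenM S (FM S f) u)) v)"
  by (simp add: lsComp_def)

lemma ls_ty: "lshom S (f,u) (X,A) (Y,B) \<Longrightarrow> lshom S (g,v) (Y,B) (Z,C) \<Longrightarrow>
   lshom S (lsComp S A (f,u) (g,v)) (X,A) (Z,C)"
  by (simp add: lshom_iff ls_comp)

lemma contr_nat': "cC f = Y \<Longrightarrow> lComp S (FM S f) (contr S Y) = lComp S (contr S (cD f)) (lTenM S (FM S f) (FM S f))"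
  using contr_nat by blast
lemma weak_nat': "cC f = Y \<Longrightarrow> lComp S (FM S f) (weak S Y) = weak S (cD f)"
  using weak_nat by blast

lemma counit_gen: "lD t = lTen S (FO S X) A \<Longrightarrow>
   lComp S (lTenM S (contr S X) (lId S A)) (lTenM S (weak S X) t) = t"
proof -
  assume t: "lD t = lTen S (FO S X) A"
  have e: "lComp S (lTenM S (weak S X) (lId S (lTen S (FO S X) A))) t = lTenM S (weak S X) t"
    using l_inter[of "weak S X" "lId S (lUnit S)" "lId S (lTen S (FO S X) A)" t] t by simp
  have e2: "lComp S (lTenM S (contr S X) (lId S A)) (lTenM S (weak S X) (lId S (lTen S (FO S X) A))) = lId S (lTen S (FO S X) A)"
  proof -
    have "lTenM S (weak S X) (lId S (lTen S (FO S X) A)) = lTenM S (lTenM S (weak S X) (lId S (FO S X))) (lId S A)" by simp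
    moreover have "lComp S (lTenM S (contr S X) (lId S A)) (lTenM S (lTenM S (weak S X) (lId S (FO S X))) (lId S A))
       = lTenM S (lComp S (contr S X) (lTenM S (weak S X) (lId S (FO S X)))) (lComp S (lId S A) (lId S A))"
      by (rule l_inter[symmetric]) simp_all
    ultimately show ?thesis by (simp add: counit)
  qed
  have "lComp S (lTenM S (contr S X) (lId S A)) (lTenM S (weak S X) t) =
     lComp S (lTenM S (contr S X) (lId S A)) (lComp S (lTenM S (weak S X) (lId S (lTen S (FO S X) A))) t)"
    by (simp only: e)
  also have "\<dots> = lComp S (lComp S (lTenM S (contr S X) (lId S A)) (lTenM S (weak S X) (lId S (lTen S (FO S X) A)))) t"
    using t by (simp del: l_inter_assoc add: l_assoc)
  also have "\<dots> = t" unfolding e2 using t by simp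
  finally show ?thesis .
qed

lemma comp_w: "lshom S (f,u) (X,A) (Y,B) \<Longrightarrow> lD v = B \<Longrightarrow>
   lsComp S A (f,u) (g, lTenM S (weak S Y) v) = (cComp S f g, lComp S u v)"
proof -
  assume a: "lshom S (f,u) (X,A) (Y,B)" "lD v = B"
  hence ty: "cD f = X" "cC f = Y" "lD u = lTen S (FO S X) A" "lC u = B" by (simp_all add: lshom_iff)
  have "lComp S (lComp S (lTenM S (contr S X) (lId S A)) (lTenM S (FM S f) u)) (lTenM S (weak S Y) v)
     = lComp S (lTenM S (contr S X) (lId S A)) (lTenM S (lComp S (FM S f) (weak S Y)) (lComp S u v))"
    using ty a(2) by (simp add: l_assoc l_inter)
  also have "\<dots> = lComp S u v" using ty a(2) by (simp add: weak_nat' counit_gen)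
  finally show ?thesis using ty by (simp add: ls_comp)
qed

lemma ls_idr: "lshom S (f,u) (X,A) (Y,B) \<Longrightarrow> lsComp S A (f,u) (lsId S (Y,B)) = (f,u)"
  by (simp add: lsId_def comp_w) (simp add: lshom_iff)

lemma assoc_core:
  assumes ty: "lD u = lTen S (FO S X) A" "lC u = B" "lD v = lTen S (FO S Y) B" "cD f = X" "cC f = Y" "cD g = Y"
  shows "lComp S (lTenM S (contr S X) (lId S A)) (lTenM S (lComp S (FM S f) (FM S g))
            (lComp S (lTenM S (contr S X) (lId S A)) (lComp S (lTenM S (FM S f) u) v)))
       = lComp S (lTenM S (contr S X) (lId S A)) (lComp S (lTenM S (FM S f) u)
            (lComp S (lTenM S (contr S Y) (lId S B)) (lTenM S (FM S g) v)))"
proof -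
  let ?cX = "contr S X" and ?iA = "lId S A" and ?Ff = "FM S f" and ?Fg = "FM S g" and ?iX = "lId S (FO S X)"
  let ?Q = "lComp S (lTenM S ?Ff u) v"
  have L2: "lTenM S (lComp S ?Ff ?Fg) (lComp S (lTenM S ?cX ?iA) ?Q)
     = lComp S (lTenM S ?iX (lTenM S ?cX ?iA)) (lTenM S (lComp S ?Ff ?Fg) ?Q)"
    using l_inter[of ?iX "lComp S ?Ff ?Fg" "lTenM S ?cX ?iA" ?Q] ty by simp
  have L3: "lComp S (lTenM S ?cX ?iA) (lTenM S ?iX (lTenM S ?cX ?iA)) = lTenM S (lComp S ?cX (lTenM S ?iX ?cX)) ?iA"
    using l_inter[of ?cX "lTenM S ?iX ?cX" ?iA ?iA] ty by simp
  have R1: "lComp S (lTenM S ?Ff u) (lTenM S (contr S Y) (lId S B)) = lComp S (lTenM S ?cX (lId S (lTen S (FO S X) A))) (lTenM S ?Ff (lTenM S ?Ff u))"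
  proof -
    have "lComp S (lTenM S ?Ff u) (lTenM S (contr S Y) (lId S B)) = lTenM S (lComp S ?Ff (contr S Y)) (lComp S (lId S (lTen S (FO S X) A)) u)"
      using l_inter[of ?Ff "contr S Y" u "lId S B"] ty by simp
    also have "\<dots> = lTenM S (lComp S ?cX (lTenM S ?Ff ?Ff)) (lComp S (lId S (lTen S (FO S X) A)) u)"
      using ty by (simp add: contr_nat')
    also have "\<dots> = lComp S (lTenM S ?cX (lId S (lTen S (FO S X) A))) (lTenM S ?Ff (lTenM S ?Ff u))"
      using l_inter[of ?cX "lTenM S ?Ff ?Ff" "lId S (lTen S (FO S X) A)" u] ty by simp
    finally show ?thesis .
  qed
  have R2: "lComp S (lTenM S ?Ff (lTenM S ?Ff u)) (lTenM S ?Fg v) = lTenM S (lComp S ?Ff ?Fg) ?Q"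
    using l_inter[of ?Ff ?Fg "lTenM S ?Ff u" v] ty by simp
  have R3: "lComp S (lTenM S ?cX ?iA) (lTenM S ?cX (lId S (lTen S (FO S X) A))) = lTenM S (lComp S ?cX (lTenM S ?cX ?iX)) ?iA"
    using l_inter[of ?cX "lTenM S ?cX ?iX" ?iA ?iA] ty by simp
  have "lComp S (lTenM S ?cX ?iA) (lTenM S (lComp S ?Ff ?Fg) (lComp S (lTenM S ?cX ?iA) ?Q))
     = lComp S (lComp S (lTenM S ?cX ?iA) (lTenM S ?iX (lTenM S ?cX ?iA))) (lTenM S (lComp S ?Ff ?Fg) ?Q)"
    unfolding L2 using ty by (simp del: l_inter_assoc add: l_assoc)
  also have "\<dots> = lComp S (lTenM S (lComp S ?cX (lTenM S ?cX ?iX)) ?iA) (lTenM S (lComp S ?Ff ?Fg) ?Q)"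
    unfolding L3 coassoc ..
  also have "\<dots> = lComp S (lComp S (lTenM S ?cX ?iA) (lTenM S ?cX (lId S (lTen S (FO S X) A)))) (lComp S (lTenM S ?Ff (lTenM S ?Ff u)) (lTenM S ?Fg v))"
    unfolding R2 R3 ..
  also have "\<dots> = lComp S (lTenM S ?cX ?iA) (lComp S (lComp S (lTenM S ?Ff u) (lTenM S (contr S Y) (lId S B))) (lTenM S ?Fg v))"
    unfolding R1 using ty by (simp del: l_inter_assoc add: l_assoc)
  also have "\<dots> = lComp S (lTenM S ?cX ?iA) (lComp S (lTenM S ?Ff u) (lComp S (lTenM S (contr S Y) (lId S B)) (lTenM S ?Fg v)))"
    using ty by (simp del: l_inter_assoc add: l_assoc)
  finally show ?thesis .
qed

lemma ls_assoc: "lshom S (f,u) (X,A) (Y,B) \<Longrightarrow> lshom S (g,v) (Y,B) (Z,C) \<Longrightarrow> lshom S (h,w) (Z,C) (W,D) \<Longrightarrow>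
  lsComp S A (lsComp S A (f,u) (g,v)) (h,w) = lsComp S A (f,u) (lsComp S B (g,v) (h,w))"
proof -
  assume a: "lshom S (f,u) (X,A) (Y,B)" "lshom S (g,v) (Y,B) (Z,C)" "lshom S (h,w) (Z,C) (W,D)"
  hence ty: "cD f = X" "cC f = Y" "lD u = lTen S (FO S X) A" "lC u = B"
    "cD g = Y" "cC g = Z" "lD v = lTen S (FO S Y) B" "lC v = C"
    "cD h = Z" "cC h = W" "lD w = lTen S (FO S Z) C" "lC w = D" by (simp_all add: lshom_iff)
  have "lComp S (lComp S (lTenM S (contr S X) (lId S A)) (lTenM S (lComp S (FM S f) (FM S g))
            (lComp S (lTenM S (contr S X) (lId S A)) (lComp S (lTenM S (FM S f) u) v)))) w
     = lComp S (lComp S (lTenM S (contr S X) (lId S A)) (lComp S (lTenM S (FM S f) u)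
            (lComp S (lTenM S (contr S Y) (lId S B)) (lTenM S (FM S g) v)))) w"
    unfolding assoc_core[OF ty(3,4,7) ty(1,2,5)] ..
  then show ?thesis using ty
    by (simp del: l_inter_assoc add: ls_comp c_assoc F_comp l_assoc)
qed

lemma ls_assoc': "lshom S a (X,A) (Y,B) \<Longrightarrow> lshom S b (Y,B) (Z,C) \<Longrightarrow> lshom S c (Z,C) (W,D) \<Longrightarrow>
  lsComp S A (lsComp S A a b) c = lsComp S A a (lsComp S B b c)"
  using ls_assoc[of "fst a" "snd a" X A Y B "fst b" "snd b" Z C "fst c" "snd c" W D] by simp

lemma ls_ty': "lshom S a (X,A) (Y,B) \<Longrightarrow> lshom S b (Y,B) (Z,C) \<Longrightarrow>
   lshom S (lsComp S A a b) (X,A) (Z,C)"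
  using ls_ty[of "fst a" "snd a" X A Y B "fst b" "snd b" Z C] by simp

lemma ls_pair: "lsComp S A (f,u) (lsPair S (p,s) (q,t)) = lsPair S (lsComp S A (f,u) (p,s)) (lsComp S A (f,u) (q,t))"
  if "cC f = cD p" "cD p = cD q" "lD s = lD t" "lD s = lTen S (FO S (cC f)) (lC u)" "lD u = lTen S (FO S (cD f)) A"
  using that by (simp add: ls_comp lsPair_def c_pair_comp) (rule l_pair_comp; simp)

lemma T_ty': "lshom S (tFun S h) (cD h, tLam S (cD h)) (cC h, tLam S (cC h))"
  by (simp add: tFun_def lshom_iff T_ty)

lemma phiT_eq: "phiT S X Y = (cId S (cProd S X Y), lPair S (tMor S (cPi1 S X Y)) (tMor S (cPi2 S X Y)))"
  using c_eta[of "cId S (cProd S X Y)" X Y] by (simp add: phiT_def lsPair_def tFun_def)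

lemma phiT_ty: "lshom S (phiT S X Y) (cProd S X Y, tLam S (cProd S X Y)) (cProd S X Y, lProd S (tLam S X) (tLam S Y))"
  unfolding phiT_eq lshom_iff by (simp add: T_ty)

lemma phiInv_props: "lshom S (phiInv S X Y) (cProd S X Y, lProd S (tLam S X) (tLam S Y)) (cProd S X Y, tLam S (cProd S X Y))
    \<and> lsComp S (tLam S (cProd S X Y)) (phiT S X Y) (phiInv S X Y) = lsId S (cProd S X Y, tLam S (cProd S X Y))
    \<and> lsComp S (lProd S (tLam S X) (tLam S Y)) (phiInv S X Y) (phiT S X Y)
         = lsId S (cProd S X Y, lProd S (tLam S X) (tLam S Y))"
proof -
  have h: "lsIso S (phiT S X Y) (cProd S X Y, tLam S (cProd S X Y)) (cProd S X Y, lProd S (tLam S X) (tLam S Y))"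
    by (rule t1[rule_format])
  have "\<exists>gv. lshom S gv (cProd S X Y, lProd S (tLam S X) (tLam S Y)) (cProd S X Y, tLam S (cProd S X Y))
    \<and> lsComp S (tLam S (cProd S X Y)) (phiT S X Y) gv = lsId S (cProd S X Y, tLam S (cProd S X Y))
    \<and> lsComp S (lProd S (tLam S X) (tLam S Y)) gv (phiT S X Y)
         = lsId S (cProd S X Y, lProd S (tLam S X) (tLam S Y))"
    using h unfolding lsIso_def snd_conv by (rule conjunct2)
  then show ?thesis unfolding phiInv_def by (rule someI_ex)
qed

definition "pinv X Y = snd (phiInv S X Y)"

lemma phiInv_eq: "phiInv S X Y = (cId S (cProd S X Y), pinv X Y)"
proof -
  obtain a b where ab: "phiInv S X Y = (a,b)" by fastforce
  have "cD a = cProd S X Y" using phiInv_props[of X Y] ab by (simp add: lshom_iff)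
  moreover have "cComp S (cId S (cProd S X Y)) a = cId S (cProd S X Y)"
    using phiInv_props[of X Y] ab by (simp add: phiT_eq ls_comp lsId_def)
  ultimately show ?thesis using ab by (simp add: pinv_def)
qed

lemma pinv_ty: "lD (pinv X Y) = lTen S (FO S (cProd S X Y)) (lProd S (tLam S X) (tLam S Y))"
   "lC (pinv X Y) = tLam S (cProd S X Y)"
  using phiInv_props[of X Y] unfolding phiInv_eq by (simp_all add: lshom_iff)

lemma inj2_ty[simp]: "lD (lInj2 S A B) = B" "lC (lInj2 S A B) = lProd S A B"
  "lComp S (lInj2 S A B) (lPi1 S A B) = lZero S B A" "lComp S (lInj2 S A B) (lPi2 S A B) = lId S B"
  by (simp_all add: lInj2_def)

lemma lsInj2_ty: "lshom S (lsInj2 S Z A B) (Z, B) (Z, lProd S A B)"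
  by (simp add: lsInj2_def lshom_iff)

lemma iT2_ty: "lshom S (iT2 S X Y) (cProd S X Y, tLam S Y) (cProd S X Y, tLam S (cProd S X Y))"
  unfolding iT2_def
  by (rule ls_ty'[OF lsInj2_ty phiInv_props[THEN conjunct1]])

lemma iT2_fst: "fst (iT2 S X Y) = cId S (cProd S X Y)"
  unfolding iT2_def lsInj2_def phiInv_eq by (simp add: ls_comp)

lemma iT2_phi: "lsComp S (tLam S Y) (iT2 S X Y) (phiT S X Y) = lsInj2 S (cProd S X Y) (tLam S X) (tLam S Y)"
proof -
  have "lsComp S (tLam S Y) (iT2 S X Y) (phiT S X Y) = lsComp S (tLam S Y) (lsInj2 S (cProd S X Y) (tLam S X) (tLam S Y))
     (lsComp S (lProd S (tLam S X) (tLam S Y)) (phiInv S X Y) (phiT S X Y))"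
    unfolding iT2_def lsInj2_def phiInv_eq phiT_eq
    by (rule ls_assoc[where Y="cProd S X Y" and Z="cProd S X Y" and W="cProd S X Y" and C="tLam S (cProd S X Y)"
        and D="lProd S (tLam S X) (tLam S Y)"])
       (use phiInv_props[of X Y] phiT_ty[of X Y] in \<open>simp_all add: lshom_iff phiInv_eq phiT_eq pinv_ty\<close>)
  also have "\<dots> = lsInj2 S (cProd S X Y) (tLam S X) (tLam S Y)"
    using phiInv_props[of X Y] unfolding lsInj2_def by (simp add: ls_idr lshom_iff)
  finally show ?thesis .
qed

lemma w_tensor_comp: "lC w = lUnit S \<Longrightarrow> lC a = lD b \<Longrightarrow> lComp S (lTenM S w a) b = lTenM S w (lComp S a b)"
  using l_inter[of w "lId S (lUnit S)" a b] by simp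

lemma iT2_pi2: "lsComp S (tLam S Y) (iT2 S X Y) (tFun S (cPi2 S X Y)) = (cPi2 S X Y, lTenM S (weak S (cProd S X Y)) (lId S (tLam S Y)))"
  and iT2_pi1: "lsComp S (tLam S Y) (iT2 S X Y) (tFun S (cPi1 S X Y)) = (cPi1 S X Y, lZero S (lTen S (FO S (cProd S X Y)) (tLam S Y)) (tLam S X))"
proof -
  let ?XY = "cProd S X Y" and ?P = "lProd S (tLam S X) (tLam S Y)"
  have e2: "tFun S (cPi2 S X Y) = lsComp S (tLam S ?XY) (phiT S X Y) (cPi2 S X Y, lTenM S (weak S ?XY) (lPi2 S (tLam S X) (tLam S Y)))"
    unfolding phiT_eq by (subst comp_w) (simp_all add: lshom_iff T_ty tFun_def)
  have e1: "tFun S (cPi1 S X Y) = lsComp S (tLam S ?XY) (phiT S X Y) (cPi1 S X Y, lTenM S (weak S ?XY) (lPi1 S (tLam S X) (tLam S Y)))"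
    unfolding phiT_eq by (subst comp_w) (simp_all add: lshom_iff T_ty tFun_def)
  have "lsComp S (tLam S Y) (iT2 S X Y) (tFun S (cPi2 S X Y)) = lsComp S (tLam S Y) (lsComp S (tLam S Y) (iT2 S X Y) (phiT S X Y)) (cPi2 S X Y, lTenM S (weak S ?XY) (lPi2 S (tLam S X) (tLam S Y)))"
    unfolding e2 by (rule ls_assoc'[OF iT2_ty phiT_ty, symmetric]) (simp add: lshom_iff)
  also have "\<dots> = (cPi2 S X Y, lTenM S (weak S (cProd S X Y)) (lId S (tLam S Y)))"
    unfolding iT2_phi lsInj2_def by (subst comp_w) (simp_all add: lshom_iff w_tensor_comp)
  finally show "lsComp S (tLam S Y) (iT2 S X Y) (tFun S (cPi2 S X Y)) = (cPi2 S X Y, lTenM S (weak S (cProd S X Y)) (lId S (tLam S Y)))" .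
  have "lsComp S (tLam S Y) (iT2 S X Y) (tFun S (cPi1 S X Y)) = lsComp S (tLam S Y) (lsComp S (tLam S Y) (iT2 S X Y) (phiT S X Y)) (cPi1 S X Y, lTenM S (weak S ?XY) (lPi1 S (tLam S X) (tLam S Y)))"
    unfolding e1 by (rule ls_assoc'[OF iT2_ty phiT_ty, symmetric]) (simp add: lshom_iff)
  also have "\<dots> = (cPi1 S X Y, lZero S (lTen S (FO S (cProd S X Y)) (tLam S Y)) (tLam S X))"
    unfolding iT2_phi lsInj2_def by (subst comp_w) (simp_all add: lshom_iff w_tensor_comp)
  finally show "lsComp S (tLam S Y) (iT2 S X Y) (tFun S (cPi1 S X Y)) = (cPi1 S X Y, lZero S (lTen S (FO S (cProd S X Y)) (tLam S Y)) (tLam S X))" .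
qed

lemma phi_cancel:
  assumes "lshom S (a1,a2) (Z,A) (cProd S X Y, tLam S (cProd S X Y))"
    and "lshom S (b1,b2) (Z,A) (cProd S X Y, tLam S (cProd S X Y))"
    and "lsComp S A (a1,a2) (phiT S X Y) = lsComp S A (b1,b2) (phiT S X Y)"
  shows "(a1,a2) = (b1,b2)"
proof -
  have r: "(c1,c2) = lsComp S A (lsComp S A (c1,c2) (phiT S X Y)) (phiInv S X Y)"
    if "lshom S (c1,c2) (Z,A) (cProd S X Y, tLam S (cProd S X Y))" for c1 c2
  proof -
    have "lsComp S A (lsComp S A (c1,c2) (phiT S X Y)) (phiInv S X Y) = lsComp S A (c1,c2) (lsComp S (tLam S (cProd S X Y)) (phiT S X Y) (phiInv S X Y))"
      unfolding phiT_eq phiInv_eq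
      by (rule ls_assoc[where Y="cProd S X Y" and Z="cProd S X Y" and W="cProd S X Y" and C="lProd S (tLam S X) (tLam S Y)"
        and D="tLam S (cProd S X Y)"])
       (use that phiInv_props[of X Y] phiT_ty[of X Y] in \<open>simp_all add: lshom_iff phiInv_eq phiT_eq pinv_ty\<close>)
    also have "\<dots> = (c1,c2)" using phiInv_props[of X Y] that by (simp add: ls_idr)
    finally show ?thesis by simp
  qed
  show ?thesis using r[OF assms(1)] r[OF assms(2)] assms(3) by simp
qed

end

context gd begin

context
  fixes X Y :: 'co and A B :: 'lo and f :: 'ca and u :: 'la
  assumes hom: "lshom S (f,u) (X,A) (Y,B)"
begin

abbreviation "UA \<equiv> UO S A"
abbreviation "UB \<equiv> UO S B"
abbreviation "Z \<equiv> cProd S X UA"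
abbreviation "bA \<equiv> FO S UA"
abbreviation "bB \<equiv> FO S UB"
abbreviation "UbA \<equiv> UO S bA"
abbreviation "UbB \<equiv> UO S bB"
abbreviation "hX \<equiv> cComp S (cPi2 S X UA) (adjEta S UA)"
abbreviation "hY \<equiv> cComp S (cPi2 S Y UB) (adjEta S UB)"
abbreviation "gg \<equiv> compr S (X,A) (f,u)"
abbreviation "ww \<equiv> lComp S (lTenM S (FM S (cPi1 S X UA)) (lId S A)) u"
abbreviation "b0 \<equiv> snd (bangS S (X,A) (f,u))"
abbreviation "bb \<equiv> snd (bangS S (Z,A) (gg,ww))"
abbreviation "PP \<equiv> cPair S (cPi1 S X UA) hX"
abbreviation "GG \<equiv> cComp S (cComp S (cProdM S (adjEta S X) (cId S UA)) (monN S (FO S X) A)) (UM S u)"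
abbreviation "KK \<equiv> cComp S (cComp S (cProdM S (adjEta S X) (cId S UbA)) (monN S (FO S X) bA)) (UM S b0)"

lemma ty0: "cD f = X" "cC f = Y" "lD u = lTen S (FO S X) A" "lC u = B"
  using hom by (simp_all add: lshom_iff)

lemma gg_eq: "gg = cPair S (cComp S (cPi1 S X UA) f) GG"
  by (simp add: compr_def)

lemma GG_ty[simp]: "cD GG = Z" "cC GG = UB"
  using ty0 by simp_all

lemma gg_ty[simp]: "cD gg = Z" "cC gg = cProd S Y UB"
  unfolding gg_eq using ty0 by simp_all

lemma ww_ty[simp]: "lD ww = lTen S (FO S Z) A" "lC ww = B"
  using ty0 by simp_all

lemma b0_eq: "b0 = lComp S (lComp S (lComp S (lTenM S (FM S (adjEta S X)) (lId S bA)) (monM S (UO S (FO S X)) UA))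
     (FM S (monN S (FO S X) A))) (FM S (UM S u))"
  by (simp add: bangS_def)

lemma b0_ty[simp]: "lD b0 = lTen S (FO S X) bA" "lC b0 = bB"
  unfolding b0_eq using ty0 by simp_all

lemma bb_eq: "bb = lComp S (lTenM S (FM S (cPi1 S X UA)) (lId S bA)) b0"
proof -
  let ?p = "cPi1 S X UA"
  have n1: "cComp S (monN S (FO S Z) A) (UM S (lTenM S (FM S ?p) (lId S A)))
     = cComp S (cProdM S (UM S (FM S ?p)) (cId S UA)) (monN S (FO S X) A)"
    using n_nat[of "FM S ?p" "lId S A"] by simp
  have m1: "lComp S (monM S (UO S (FO S Z)) UA) (FM S (cProdM S (UM S (FM S ?p)) (cId S UA)))
     = lComp S (lTenM S (FM S (UM S (FM S ?p))) (lId S bA)) (monM S (UO S (FO S X)) UA)"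
    using m_nat[of "UM S (FM S ?p)" "cId S UA"] by simp
  have e1: "cComp S (adjEta S Z) (UM S (FM S ?p)) = cComp S ?p (adjEta S X)"
    using eta_nat[of ?p] by simp
  have "bb = lComp S (lComp S (lComp S (lTenM S (FM S (adjEta S Z)) (lId S bA)) (monM S (UO S (FO S Z)) UA))
     (FM S (monN S (FO S Z) A))) (FM S (UM S ww))"
    by (simp add: bangS_def)
  also have "\<dots> = lComp S (lTenM S (FM S (adjEta S Z)) (lId S bA)) (lComp S (monM S (UO S (FO S Z)) UA)
     (lComp S (FM S (cComp S (monN S (FO S Z) A) (UM S (lTenM S (FM S ?p) (lId S A))))) (FM S (UM S u))))"
    using ty0 by (simp del: l_inter_assoc add: l_assoc U_comp F_comp)
  also have "\<dots> = lComp S (lTenM S (FM S (adjEta S Z)) (lId S bA)) (lComp S (lComp S (monM S (UO S (FO S Z)) UA)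
     (FM S (cProdM S (UM S (FM S ?p)) (cId S UA)))) (lComp S (FM S (monN S (FO S X) A)) (FM S (UM S u))))"
    unfolding n1 using ty0 by (simp del: l_inter_assoc add: l_assoc F_comp)
  also have "\<dots> = lComp S (lComp S (lTenM S (FM S (adjEta S Z)) (lId S bA)) (lTenM S (FM S (UM S (FM S ?p))) (lId S bA)))
      (lComp S (monM S (UO S (FO S X)) UA) (lComp S (FM S (monN S (FO S X) A)) (FM S (UM S u))))"
    unfolding m1 using ty0 by (simp del: l_inter_assoc add: l_assoc)
  also have "lComp S (lTenM S (FM S (adjEta S Z)) (lId S bA)) (lTenM S (FM S (UM S (FM S ?p))) (lId S bA))
      = lComp S (lTenM S (FM S ?p) (lId S bA)) (lTenM S (FM S (adjEta S X)) (lId S bA))"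
  proof -
    have "lComp S (lTenM S (FM S (adjEta S Z)) (lId S bA)) (lTenM S (FM S (UM S (FM S ?p))) (lId S bA))
        = lTenM S (FM S (cComp S (adjEta S Z) (UM S (FM S ?p)))) (lId S bA)"
      using l_inter[of "FM S (adjEta S Z)" "FM S (UM S (FM S ?p))" "lId S bA" "lId S bA"] by (simp add: F_comp)
    also have "\<dots> = lTenM S (FM S (cComp S ?p (adjEta S X))) (lId S bA)" unfolding e1 ..
    also have "\<dots> = lComp S (lTenM S (FM S ?p) (lId S bA)) (lTenM S (FM S (adjEta S X)) (lId S bA))"
      using l_inter[of "FM S ?p" "FM S (adjEta S X)" "lId S bA" "lId S bA"] by (simp add: F_comp)
    finally show ?thesis .
  qed
  also have "lComp S (lComp S (lTenM S (FM S ?p) (lId S bA)) (lTenM S (FM S (adjEta S X)) (lId S bA)))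
      (lComp S (monM S (UO S (FO S X)) UA) (lComp S (FM S (monN S (FO S X) A)) (FM S (UM S u))))
     = lComp S (lTenM S (FM S ?p) (lId S bA)) b0"
    unfolding b0_eq using ty0 by (simp del: l_inter_assoc add: l_assoc)
  finally show ?thesis .
qed

lemma E1: "cComp S gg hY = cComp S PP KK"
proof -
  let ?eX = "adjEta S X" and ?FX = "FO S X"
  have lhs: "cComp S gg hY = cComp S GG (adjEta S UB)"
    unfolding gg_eq using ty0 by (simp add: c_assoc[symmetric])
  have step1: "cComp S PP (cProdM S ?eX (cId S UbA)) = cPair S (cComp S (cPi1 S X UA) ?eX) hX"
    by (simp add: pair_prodM)
  have n1: "cComp S (monN S ?FX bA) (UM S (lTenM S (FM S ?eX) (lId S bA)))
     = cComp S (cProdM S (UM S (FM S ?eX)) (cId S UbA)) (monN S (FO S (UO S ?FX)) bA)"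
    using n_nat[of "FM S ?eX" "lId S bA"] by simp
  have e1: "cComp S ?eX (UM S (FM S ?eX)) = cComp S ?eX (adjEta S (UO S ?FX))"
    using eta_nat[of ?eX] by simp
  have p2: "cPair S (cComp S (cComp S (cPi1 S X UA) ?eX) (adjEta S (UO S ?FX))) hX
      = cComp S (cProdM S ?eX (cId S UA)) (cProdM S (adjEta S (UO S ?FX)) (adjEta S UA))"
    unfolding cProdM_def[of S ?eX] by (simp add: pair_prodM c_assoc)
  have ma: "cComp S (cProdM S (adjEta S (UO S ?FX)) (adjEta S UA)) (cComp S (monN S (FO S (UO S ?FX)) bA) (UM S (monM S (UO S ?FX) UA)))
     = adjEta S (cProd S (UO S ?FX) UA)"
    using ma_eta[of "UO S ?FX" UA] by (simp add: c_assoc)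
  have en: "cComp S (adjEta S (cProd S (UO S ?FX) UA)) (UM S (FM S (cComp S (monN S ?FX A) (UM S u))))
     = cComp S (cComp S (monN S ?FX A) (UM S u)) (adjEta S UB)"
    using eta_nat[of "cComp S (monN S ?FX A) (UM S u)"] ty0 by simp
  have "cComp S PP KK = cComp S (cComp S PP (cProdM S ?eX (cId S UbA))) (cComp S (monN S ?FX bA) (UM S b0))"
    by (simp add: c_assoc)
  also have "\<dots> = cComp S (cPair S (cComp S (cPi1 S X UA) ?eX) hX) (cComp S (cComp S (monN S ?FX bA) (UM S (lTenM S (FM S ?eX) (lId S bA))))
      (cComp S (UM S (monM S (UO S ?FX) UA)) (UM S (FM S (cComp S (monN S ?FX A) (UM S u))))))"
    unfolding step1 b0_eq using ty0 by (simp add: c_assoc U_comp F_comp)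
  also have "\<dots> = cComp S (cComp S (cPair S (cComp S (cPi1 S X UA) ?eX) hX) (cProdM S (UM S (FM S ?eX)) (cId S UbA)))
      (cComp S (monN S (FO S (UO S ?FX)) bA) (cComp S (UM S (monM S (UO S ?FX) UA)) (UM S (FM S (cComp S (monN S ?FX A) (UM S u))))))"
    unfolding n1 using ty0 by (simp add: c_assoc)
  also have "cComp S (cPair S (cComp S (cPi1 S X UA) ?eX) hX) (cProdM S (UM S (FM S ?eX)) (cId S UbA))
      = cPair S (cComp S (cComp S (cPi1 S X UA) ?eX) (adjEta S (UO S ?FX))) hX"
    by (simp add: pair_prodM c_assoc e1)
  also have "\<dots> = cComp S (cProdM S ?eX (cId S UA)) (cProdM S (adjEta S (UO S ?FX)) (adjEta S UA))" by (rule p2)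
  also have "cComp S (cComp S (cProdM S ?eX (cId S UA)) (cProdM S (adjEta S (UO S ?FX)) (adjEta S UA)))
      (cComp S (monN S (FO S (UO S ?FX)) bA) (cComp S (UM S (monM S (UO S ?FX) UA)) (UM S (FM S (cComp S (monN S ?FX A) (UM S u))))))
     = cComp S (cProdM S ?eX (cId S UA)) (cComp S (cComp S (cProdM S (adjEta S (UO S ?FX)) (adjEta S UA)) (cComp S (monN S (FO S (UO S ?FX)) bA) (UM S (monM S (UO S ?FX) UA))))
        (UM S (FM S (cComp S (monN S ?FX A) (UM S u)))))"
    using ty0 by (simp add: c_assoc)
  also have "\<dots> = cComp S (cProdM S ?eX (cId S UA)) (cComp S (cComp S (monN S ?FX A) (UM S u)) (adjEta S UB))"
    unfolding ma en ..
  also have "\<dots> = cComp S GG (adjEta S UB)" using ty0 by (simp add: c_assoc)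
  finally show ?thesis using lhs by simp
qed

declare t2[simp]

abbreviation "Z2 \<equiv> cProd S X UbA"
abbreviation "iX \<equiv> iT2 S X UA"
abbreviation "iX2 \<equiv> iT2 S X UbA"
abbreviation "dX \<equiv> snd (scrD S X A)"
abbreviation "QQ \<equiv> compr S (X,bA) (f,b0)"
abbreviation "W0 \<equiv> lComp S (lTenM S (FM S (cPi1 S X UbA)) (lId S bA)) b0"

lemma iT2_split: "iT2 S X' Y' = (cId S (cProd S X' Y'), snd (iT2 S X' Y'))"
  using iT2_fst[of X' Y'] by (metis prod.collapse)

lemma snd_indep: "snd (lsComp S A' a (x, v)) = snd (lsComp S A' a (y, v))"
  by (simp add: lsComp_def)

lemma S2: "scrD S X A = (cId S Z, dX)" "lsComp S A iX (tFun S hX) = (hX, dX)"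
proof -
  have e: "scrD S X A = lsComp S A iX (cId S Z, tMor S hX)"
    by (simp add: scrD_def diffD2_def diffD_def)
  define i2 where "i2 = snd iX"
  have ie: "iX = (cId S Z, i2)" unfolding i2_def by (rule iT2_split)
  show "scrD S X A = (cId S Z, dX)" unfolding e ie by (simp add: ls_comp)
  show "lsComp S A iX (tFun S hX) = (hX, dX)" unfolding e tFun_def ie by (simp add: ls_comp)
qed

lemma iX_ty: "lshom S iX (Z, A) (Z, tLam S Z)" using iT2_ty[of X UA] by simp
lemma iX2_ty: "lshom S iX2 (Z2, bA) (Z2, tLam S Z2)" using iT2_ty[of X UbA] by simp

lemma dX_ty[simp]: "lD dX = lTen S (FO S Z) A" "lC dX = bA"
proof -
  have "lshom S (lsComp S A iX (tFun S hX)) (Z, A) (UbA, tLam S UbA)"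
    by (rule ls_ty'[OF iX_ty]) (use T_ty'[of hX] in simp)
  then show "lD dX = lTen S (FO S Z) A" "lC dX = bA" by (simp_all only: S2(2) lshom_iff t2)
qed

lemma LHS: "lsComp S A (scrD S X A) (bangS S (WObj S (X, A)) (WMor S (X, A) (f, u)))
   = (gg, lComp S (lComp S (lTenM S (contr S Z) (lId S A)) (lTenM S (lId S (FO S Z)) dX)) bb)"
proof -
  have "WObj S (X, A) = (Z, A)" by (simp add: WObj_def)
  moreover have "WMor S (X, A) (f, u) = (gg, ww)" by (simp add: WMor_def)
  moreover have "fst (bangS S (Z, A) (gg, ww)) = gg" by (simp add: bangS_def)
  ultimately show ?thesis by (subst S2(1)) (simp add: lsComp_def)
qed

lemma QQ_eq: "QQ = cPair S (cComp S (cPi1 S X UbA) f) KK" by (simp add: compr_def)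
lemma QQ_ty[simp]: "cD QQ = Z2" "cC QQ = cProd S Y UbB" unfolding QQ_eq using ty0 by simp_all
lemma KK_ty[simp]: "cD KK = Z2" "cC KK = UbB" using ty0 by simp_all
lemma KK_eq: "KK = cComp S QQ (cPi2 S Y UbB)" unfolding QQ_eq using ty0 by simp

lemma S9: "lsComp S bA iX2 (tFun S KK) = (KK, W0)"
proof -
  have h0: "lshom S (f, b0) (X, bA) (Y, bB)" using ty0 by (simp add: lshom_iff)
  have t3i: "lsComp S bA (QQ, W0) (iT2 S Y UbB) = lsComp S bA iX2 (tFun S QQ)"
    using t3[rule_format, OF h0] by (simp add: WMor_def)
  have tyW: "lshom S (QQ, W0) (Z2, bA) (cProd S Y UbB, bB)" using ty0 by (simp add: lshom_iff)
  have tyY: "lshom S (iT2 S Y UbB) (cProd S Y UbB, bB) (cProd S Y UbB, tLam S (cProd S Y UbB))"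
    using iT2_ty[of Y UbB] by simp
  have "lsComp S bA iX2 (tFun S KK) = lsComp S bA iX2 (lsComp S (tLam S Z2) (tFun S QQ) (tFun S (cPi2 S Y UbB)))"
    unfolding KK_eq by (subst T_comp) simp_all
  also have "\<dots> = lsComp S bA (lsComp S bA iX2 (tFun S QQ)) (tFun S (cPi2 S Y UbB))"
    by (rule ls_assoc'[OF iX2_ty, symmetric]) (use T_ty'[of QQ] T_ty'[of "cPi2 S Y UbB"] in simp_all)
  also have "\<dots> = lsComp S bA (QQ, W0) (lsComp S bB (iT2 S Y UbB) (tFun S (cPi2 S Y UbB)))"
    unfolding t3i[symmetric]
    by (rule ls_assoc'[OF tyW tyY]) (use T_ty'[of "cPi2 S Y UbB"] in simp_all)
  also have "\<dots> = (KK, W0)"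
    using iT2_pi2[where X=Y and Y=UbB] tyW KK_eq by (simp add: comp_w)
  finally show ?thesis .
qed

lemma phi_cancel': "lshom S a (Z',A') (cProd S X' Y', tLam S (cProd S X' Y')) \<Longrightarrow>
   lshom S b (Z',A') (cProd S X' Y', tLam S (cProd S X' Y')) \<Longrightarrow>
   lsComp S A' a (phiT S X' Y') = lsComp S A' b (phiT S X' Y') \<Longrightarrow> a = b"
  using phi_cancel[of "fst a" "snd a" Z' A' X' Y' "fst b" "snd b"] by simp

lemma PP_ty[simp]: "cD PP = Z" "cC PP = Z2" by simp_all

lemma PPd_ty: "lshom S (PP, dX) (Z, A) (Z2, bA)" by (simp add: lshom_iff)

lemma S8: "lsComp S A iX (tFun S PP) = lsComp S A (PP, dX) iX2"
proof (rule phi_cancel'[where X'=X and Y'=UbA and Z'=Z and A'=A])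
  show "lshom S (lsComp S A iX (tFun S PP)) (Z, A) (Z2, tLam S Z2)"
    by (rule ls_ty'[OF iX_ty]) (use T_ty'[of PP] in simp)
  show "lshom S (lsComp S A (PP, dX) iX2) (Z, A) (Z2, tLam S Z2)"
    by (rule ls_ty'[OF PPd_ty iX2_ty])
  define i2 where "i2 = snd iX"
  have ie: "iX = (cId S Z, i2)" unfolding i2_def by (rule iT2_split)
  have i2ty: "lD i2 = lTen S (FO S Z) A" "lC i2 = tLam S Z"
    using iX_ty unfolding ie by (simp_all add: lshom_iff)
  have "lsComp S A (lsComp S A iX (tFun S PP)) (phiT S X UbA) = lsComp S A iX (lsComp S (tLam S Z) (tFun S PP) (phiT S X UbA))"
    by (rule ls_assoc'[OF iX_ty]) (use T_ty'[of PP] phiT_ty[of X UbA] in simp_all)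
  also have "lsComp S (tLam S Z) (tFun S PP) (phiT S X UbA) = lsPair S (tFun S (cPi1 S X UA)) (tFun S hX)"
  proof -
    have "lsComp S (tLam S Z) (tFun S PP) (phiT S X UbA) = lsPair S (lsComp S (tLam S Z) (tFun S PP) (tFun S (cPi1 S X UbA)))
        (lsComp S (tLam S Z) (tFun S PP) (tFun S (cPi2 S X UbA)))"
      unfolding phiT_def tFun_def by (rule ls_pair) (simp_all add: T_ty)
    also have "\<dots> = lsPair S (tFun S (cPi1 S X UA)) (tFun S hX)"
      using T_comp[of PP "cPi1 S X UbA"] T_comp[of PP "cPi2 S X UbA"] by simp
    finally show ?thesis .
  qed
  also have "lsComp S A iX (lsPair S (tFun S (cPi1 S X UA)) (tFun S hX))
     = lsPair S (lsComp S A iX (tFun S (cPi1 S X UA))) (lsComp S A iX (tFun S hX))"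
    unfolding ie tFun_def by (rule ls_pair) (use i2ty in \<open>simp_all add: T_ty\<close>)
  also have "\<dots> = (PP, lPair S (lZero S (lTen S (FO S Z) A) (tLam S X)) dX)"
    unfolding S2(2) using iT2_pi1[where X=X and Y=UA] by (simp add: lsPair_def)
  also have "\<dots> = lsComp S A (PP, dX) (lsInj2 S Z2 (tLam S X) bA)"
    unfolding lsInj2_def
    by (subst comp_w[OF PPd_ty]) (simp_all add: lInj2_def l_pair_comp)
  also have "\<dots> = lsComp S A (PP, dX) (lsComp S bA iX2 (phiT S X UbA))"
    using iT2_phi[where X=X and Y=UbA] by simp
  also have "\<dots> = lsComp S A (lsComp S A (PP, dX) iX2) (phiT S X UbA)"
    by (rule ls_assoc'[OF PPd_ty iX2_ty, symmetric]) (use phiT_ty[of X UbA] in simp)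
  finally show "lsComp S A (lsComp S A iX (tFun S PP)) (phiT S X UbA) = lsComp S A (lsComp S A (PP, dX) iX2) (phiT S X UbA)" .
qed

lemma RHS: "lsComp S A (WMor S (X,A) (f,u)) (scrD S Y B)
   = (gg, lComp S (lComp S (lTenM S (contr S Z) (lId S A)) (lTenM S (FM S PP) dX)) W0)"
proof -
  let ?iY = "iT2 S Y UB" and ?ZY = "cProd S Y UB"
  have W: "WMor S (X,A) (f,u) = (gg, ww)" by (simp add: WMor_def)
  have tyg: "lshom S (gg,ww) (Z,A) (?ZY, B)" by (simp add: lshom_iff)
  have tyY: "lshom S ?iY (?ZY, B) (?ZY, tLam S ?ZY)" using iT2_ty[of Y UB] by simp
  have tyD: "lshom S (diffD S hY) (?ZY, tLam S ?ZY) (?ZY, tLam S UbB)"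
    by (simp add: diffD_def lshom_iff T_ty)
  have sc: "scrD S Y B = lsComp S B ?iY (diffD S hY)" by (simp add: scrD_def diffD2_def)
  define i2 where "i2 = snd iX"
  have ie: "iX = (cId S Z, i2)" unfolding i2_def by (rule iT2_split)
  have "lsComp S A (WMor S (X,A) (f,u)) (scrD S Y B) = lsComp S A (lsComp S A (gg,ww) ?iY) (diffD S hY)"
    unfolding sc W by (rule ls_assoc'[OF tyg tyY tyD, symmetric])
  also have "\<dots> = lsComp S A (lsComp S A iX (tFun S gg)) (diffD S hY)"
    using t3[rule_format, OF hom] W by simp
  also have "\<dots> = lsComp S A iX (lsComp S (tLam S Z) (tFun S gg) (diffD S hY))"
    by (rule ls_assoc'[OF iX_ty _ tyD]) (use T_ty'[of gg] in simp)
  also have "lsComp S (tLam S Z) (tFun S gg) (diffD S hY) = (gg, tMor S (cComp S gg hY))"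
  proof -
    have e: "tMor S (cComp S gg hY) = snd (lsComp S (tLam S Z) (tFun S gg) (tFun S hY))"
      using arg_cong[where f=snd, OF T_comp[of gg hY]] by (simp add: tFun_def)
    show ?thesis unfolding e by (simp add: lsComp_def diffD_def tFun_def)
  qed
  also have "lsComp S A iX (gg, tMor S (cComp S gg hY)) = (gg, snd (lsComp S A iX (tFun S (cComp S gg hY))))"
    unfolding ie by (simp add: ls_comp tFun_def)
  also have "lsComp S A iX (tFun S (cComp S gg hY)) = lsComp S A iX (lsComp S (tLam S Z) (tFun S PP) (tFun S KK))"
    unfolding E1 by (subst T_comp) simp_all
  also have "\<dots> = lsComp S A (lsComp S A iX (tFun S PP)) (tFun S KK)"
    by (rule ls_assoc'[OF iX_ty, symmetric]) (use T_ty'[of PP] T_ty'[of KK] in simp_all)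
  also have "\<dots> = lsComp S A (PP, dX) (lsComp S bA iX2 (tFun S KK))"
    unfolding S8 by (rule ls_assoc'[OF PPd_ty iX2_ty]) (use T_ty'[of KK] in simp)
  also have "\<dots> = (cComp S PP KK, lComp S (lComp S (lTenM S (contr S Z) (lId S A)) (lTenM S (FM S PP) dX)) W0)"
    unfolding S9 by (simp add: ls_comp)
  finally show ?thesis by simp
qed

lemma main: "lsComp S A (scrD S X A) (bangS S (WObj S (X, A)) (WMor S (X, A) (f, u)))
       = lsComp S A (WMor S (X, A) (f, u)) (scrD S Y B)"
  unfolding LHS RHS bb_eq using ty0 by (simp add: l_assoc F_comp[symmetric])

end
end

theorem proposition4p25:
  fixes S :: "('co, 'ca, 'lo, 'la) lnl_data"
    and X Y :: 'co and A B :: 'lo and f :: 'ca and u :: 'la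
  assumes "GDSC S"
    and "lshom S (f, u) (X, A) (Y, B)"
  shows "lsComp S A (scrD S X A) (bangS S (WObj S (X, A)) (WMor S (X, A) (f, u)))
       = lsComp S A (WMor S (X, A) (f, u)) (scrD S Y B)"
  by (rule gd.main[OF gd.intro[OF assms(1)] assms(2)])

end
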